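(* Every finitely generated centrally nilpotent brace is supersoluble.
   Context: A brace (skew left brace) is a set $B$ with two binary operations $+$ and $\cdot$ such that $(B,+)$ and $(B,\cdot)$ are groups and $a(b+c)=ab-a+ac$ for all $a,b,c\in B$. A subbrace is a subset that is a subgroup of both groups; $B$ is finitely generated if it is the smallest subbrace containing some finite subset. $\lambda_a(b)=-a+ab$ defines a homomorphism $\lambda\colon(B,\cdot)\to\operatorname{Aut}(B,+)$. An ideal is a subbrace normal in both groups and invariant under all $\lambda_b$; quotients by ideals are braces. $\operatorname{Soc}(B)=\operatorname{Ker}\lambda\cap Z(B,+)$, $\zeta(B)=\operatorname{Soc}(B)\cap Z(B,\cdot)$; $\zeta_0(B)=\{0\}$, $\zeta_{k+1}(B)/\zeta_k(B)=\zeta(B/\zeta_k(B))$; $B$ is centrally nilpotent if $B=\zeta_m(B)$ for some $m$. $B$ is supersoluble if there is a finite chain of ideals $\{0\}=I_0\le\dots\le I_n=B$ such that for each $i$, either $(I_{i+1}/I_i,+)$ is infinite cyclic and $I_{i+1}/I_i\le\operatorname{Soc}(B/I_i)$, or $I_{i+1}/I_i$ has prime order. *)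

theory Defs
  imports "HOL-Algebra.Algebra"
begin

(* A (skew left) brace is represented by a HOL-Algebra ring record B:
   carrier B is the underlying set, ring.add B is the operation +, monoid.mult B is the
   operation \<cdot>.  (B,+) is the group add_monoid B, (B,\<cdot>) is the group B. *)

definition brace :: "('a, 'm) ring_scheme \<Rightarrow> bool" where
  "brace B \<longleftrightarrow> group (add_monoid B) \<and> group B \<and>
     (\<forall>a\<in>carrier B. \<forall>b\<in>carrier B. \<forall>c\<in>carrier B.
        monoid.mult B a (ring.add B b c) = ring.add B (ring.add B (monoid.mult B a b) (a_inv B a)) (monoid.mult B a c))"

definition blambda :: "('a, 'm) ring_scheme \<Rightarrow> 'a \<Rightarrow> 'a \<Rightarrow> 'a" where
  "blambda B a b = ring.add B (a_inv B a) (monoid.mult B a b)"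

definition subbrace :: "('a, 'm) ring_scheme \<Rightarrow> 'a set \<Rightarrow> bool" where
  "subbrace B H \<longleftrightarrow> subgroup H (add_monoid B) \<and> subgroup H B"

definition generated_subbrace :: "('a, 'm) ring_scheme \<Rightarrow> 'a set \<Rightarrow> 'a set" where
  "generated_subbrace B S = \<Inter>{H. subbrace B H \<and> S \<subseteq> H}"

definition finitely_generated_brace :: "('a, 'm) ring_scheme \<Rightarrow> bool" where
  "finitely_generated_brace B \<longleftrightarrow>
     (\<exists>S. finite S \<and> S \<subseteq> carrier B \<and> generated_subbrace B S = carrier B)"

definition brace_ideal :: "('a, 'm) ring_scheme \<Rightarrow> 'a set \<Rightarrow> bool" where
  "brace_ideal B I \<longleftrightarrow> subbrace B I \<and> normal I (add_monoid B) \<and> normal I B \<and>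
     (\<forall>b\<in>carrier B. \<forall>a\<in>I. blambda B b a \<in> I)"

(* quotient brace B/I: carrier = cosets a + I (= aI for an ideal I),
   operations induced by the setwise sum / product of cosets *)
definition brace_quot :: "('a, 'm) ring_scheme \<Rightarrow> 'a set \<Rightarrow> 'a set ring" where
  "brace_quot B I = \<lparr> carrier = a_rcosets\<^bsub>B\<^esub> I, monoid.mult = set_mult B, one = I,
                       ring.zero = I, ring.add = set_add B \<rparr>"

definition socle :: "('a, 'm) ring_scheme \<Rightarrow> 'a set" where
  "socle B = {a \<in> carrier B. (\<forall>b\<in>carrier B. blambda B a b = b) \<and>
                            (\<forall>b\<in>carrier B. ring.add B a b = ring.add B b a)}"

definition bcentre :: "('a, 'm) ring_scheme \<Rightarrow> 'a set" where
  "bcentre B = {a \<in> socle B. \<forall>b\<in>carrier B. monoid.mult B a b = monoid.mult B b a}"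

fun zeta_series :: "('a, 'm) ring_scheme \<Rightarrow> nat \<Rightarrow> 'a set" where
  "zeta_series B 0 = {ring.zero B}"
| "zeta_series B (Suc k) =
     {a \<in> carrier B. a_r_coset B (zeta_series B k) a \<in> bcentre (brace_quot B (zeta_series B k))}"

definition centrally_nilpotent :: "('a, 'm) ring_scheme \<Rightarrow> bool" where
  "centrally_nilpotent B \<longleftrightarrow> (\<exists>m. zeta_series B m = carrier B)"

definition sub_quot :: "('a, 'm) ring_scheme \<Rightarrow> 'a set \<Rightarrow> 'a set \<Rightarrow> 'a set set" where
  "sub_quot B J I = {a_r_coset B I a | a. a \<in> J}"

definition supersoluble :: "('a, 'm) ring_scheme \<Rightarrow> bool" where
  "supersoluble B \<longleftrightarrow>
     (\<exists>n. \<exists>I :: nat \<Rightarrow> 'a set.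
        I 0 = {ring.zero B} \<and> I n = carrier B \<and>
        (\<forall>i\<le>n. brace_ideal B (I i)) \<and>
        (\<forall>i<n. I i \<subseteq> I (Suc i)) \<and>
        (\<forall>i<n.
           (let Q = brace_quot B (I i); S = sub_quot B (I (Suc i)) (I i) in
             (infinite S \<and> (\<exists>g\<in>S. S = generate (add_monoid Q) {g}) \<and> S \<subseteq> socle Q)
             \<or> Factorial_Ring.prime (card S))))"

end

theory Submission
  imports Defs
begin

locale br =
  fixes B (structure)
  assumes br: "brace B"
begin

sublocale A: group "add_monoid B"
  rewrites "carrier (add_monoid B) = carrier B"
       and "monoid.mult (add_monoid B) = ring.add B"
       and "one (add_monoid B) = ring.zero B"
       and "m_inv (add_monoid B) = a_inv B"
  using br unfolding brace_def by (auto simp: a_inv_def)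

sublocale M: group B
  using br unfolding brace_def by auto

lemma distr: "a \<in> carrier B \<Longrightarrow> b \<in> carrier B \<Longrightarrow> c \<in> carrier B \<Longrightarrow>
   a \<otimes> (b \<oplus> c) = a \<otimes> b \<oplus> \<ominus> a \<oplus> a \<otimes> c"
  using br unfolding brace_def by auto

lemma A_cancel1 [simp]: "x \<in> carrier B \<Longrightarrow> y \<in> carrier B \<Longrightarrow> x \<oplus> (\<ominus> x \<oplus> y) = y"
  by (simp flip: A.m_assoc)
lemma A_cancel2 [simp]: "x \<in> carrier B \<Longrightarrow> y \<in> carrier B \<Longrightarrow> \<ominus> x \<oplus> (x \<oplus> y) = y"
  by (simp flip: A.m_assoc)

lemmas gs = A.m_assoc A.inv_mult_group

lemma one_zero [simp]: "\<one> = \<zero>"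
proof -
  have "\<one> \<otimes> (\<zero> \<oplus> \<zero>) = \<one> \<otimes> \<zero> \<oplus> \<ominus> \<one> \<oplus> \<one> \<otimes> \<zero>"
    by (rule distr) auto
  hence "\<zero> = \<ominus> \<one>" by (simp add: gs)
  hence "\<ominus> \<zero> = \<ominus> (\<ominus> \<one>)" by simp
  thus ?thesis by (simp add: gs)
qed

definition lam where "lam a b = blambda B a b"

lemma lam_def': "lam a b = \<ominus> a \<oplus> a \<otimes> b"
  by (simp add: lam_def blambda_def)

lemma lam_closed [simp]: "a \<in> carrier B \<Longrightarrow> b \<in> carrier B \<Longrightarrow> lam a b \<in> carrier B"
  by (simp add: lam_def')

lemma mult_lam: "a \<in> carrier B \<Longrightarrow> b \<in> carrier B \<Longrightarrow> a \<otimes> b = a \<oplus> lam a b"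
  by (simp add: lam_def')

lemma lam_add: "a \<in> carrier B \<Longrightarrow> b \<in> carrier B \<Longrightarrow> c \<in> carrier B \<Longrightarrow>
   lam a (b \<oplus> c) = lam a b \<oplus> lam a c"
  by (simp add: lam_def' distr gs)

lemma lam_zero [simp]: "a \<in> carrier B \<Longrightarrow> lam a \<zero> = \<zero>"
proof -
  assume a: "a \<in> carrier B"
  have "lam a (\<zero> \<oplus> \<zero>) = lam a \<zero> \<oplus> lam a \<zero>" using a by (intro lam_add) auto
  hence "lam a \<zero> \<oplus> \<zero> = lam a \<zero> \<oplus> lam a \<zero>" using a by simp
  thus ?thesis using a by (metis A.l_cancel lam_closed A.one_closed)
qed

lemma lam_neg: "a \<in> carrier B \<Longrightarrow> b \<in> carrier B \<Longrightarrow> lam a (\<ominus> b) = \<ominus> lam a b"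
proof -
  assume a: "a \<in> carrier B" and b: "b \<in> carrier B"
  have "lam a (\<ominus> b) \<oplus> lam a b = \<zero>" using a b by (simp flip: lam_add add: gs)
  thus ?thesis using a b by (metis A.inv_equality A.inv_closed lam_closed)
qed

lemma lam_mult: "a \<in> carrier B \<Longrightarrow> b \<in> carrier B \<Longrightarrow> c \<in> carrier B \<Longrightarrow>
   lam (a \<otimes> b) c = lam a (lam b c)"
proof -
  assume a: "a \<in> carrier B" and b: "b \<in> carrier B" and c: "c \<in> carrier B"
  have "lam a (lam b c) = lam a (\<ominus> b \<oplus> b \<otimes> c)" by (simp add: lam_def')
  also have "\<dots> = \<ominus> lam a b \<oplus> lam a (b \<otimes> c)" using a b c by (simp add: lam_add lam_neg)
  also have "\<dots> = \<ominus> (a \<otimes> b) \<oplus> a \<oplus> (\<ominus> a \<oplus> a \<otimes> (b \<otimes> c))" using a b c by (simp add: lam_def' gs)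
  also have "\<dots> = lam (a \<otimes> b) c" using a b c by (simp add: lam_def' gs M.m_assoc)
  finally show ?thesis by simp
qed

lemma lam_one [simp]: "b \<in> carrier B \<Longrightarrow> lam \<zero> b = b"
proof -
  assume b: "b \<in> carrier B"
  have "\<zero> \<otimes> b = b" using M.l_one[OF b] by simp
  thus ?thesis using b by (simp add: lam_def')
qed

lemma lam_inv1 [simp]: "a \<in> carrier B \<Longrightarrow> b \<in> carrier B \<Longrightarrow> lam (inv a) (lam a b) = b"
  by (simp flip: lam_mult)

lemma lam_inv2 [simp]: "a \<in> carrier B \<Longrightarrow> b \<in> carrier B \<Longrightarrow> lam a (lam (inv a) b) = b"
  by (simp flip: lam_mult)

lemma add_mult: "a \<in> carrier B \<Longrightarrow> b \<in> carrier B \<Longrightarrow> a \<oplus> b = a \<otimes> lam (inv a) b"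
  by (simp add: mult_lam)

lemma neg_lam: "a \<in> carrier B \<Longrightarrow> \<ominus> a = lam a (inv a)"
proof -
  assume a: "a \<in> carrier B"
  have "a \<oplus> lam a (inv a) = \<zero>" using a by (simp flip: mult_lam)
  thus ?thesis using a by (metis A.inv_equality A.inv_closed lam_closed M.inv_closed A.r_inv A.l_inv gs(1))
qed

end

context br begin

lemma asg_sub: "subgroup T (add_monoid B) \<Longrightarrow> T \<subseteq> carrier B"
  using subgroup.subset by force
lemma asg_add: "subgroup T (add_monoid B) \<Longrightarrow> x \<in> T \<Longrightarrow> y \<in> T \<Longrightarrow> x \<oplus> y \<in> T"
  using subgroup.m_closed by force
lemma asg_neg: "subgroup T (add_monoid B) \<Longrightarrow> x \<in> T \<Longrightarrow> \<ominus> x \<in> T"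
  using subgroup.m_inv_closed[of T "add_monoid B" x] unfolding a_inv_def by simp
lemma asg_zero: "subgroup T (add_monoid B) \<Longrightarrow> \<zero> \<in> T"
  using subgroup.one_closed by force
lemma asgI: "T \<subseteq> carrier B \<Longrightarrow> \<zero> \<in> T \<Longrightarrow> (\<And>x y. x \<in> T \<Longrightarrow> y \<in> T \<Longrightarrow> x \<oplus> y \<in> T)
   \<Longrightarrow> (\<And>x. x \<in> T \<Longrightarrow> \<ominus> x \<in> T) \<Longrightarrow> subgroup T (add_monoid B)"
  by (rule A.subgroupI) auto

lemma msg_zero: "subgroup T B \<Longrightarrow> \<zero> \<in> T"
  using subgroup.one_closed by force

definition "bid I \<longleftrightarrow> brace_ideal B I"

lemma idealD:
  assumes "bid I"
  shows "subgroup I (add_monoid B)" "subgroup I B" "I \<subseteq> carrier B" "\<zero> \<in> I"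
    "\<And>x y. x \<in> I \<Longrightarrow> y \<in> I \<Longrightarrow> x \<oplus> y \<in> I"
    "\<And>x. x \<in> I \<Longrightarrow> \<ominus> x \<in> I"
    "\<And>x y. x \<in> I \<Longrightarrow> y \<in> I \<Longrightarrow> x \<otimes> y \<in> I"
    "\<And>x. x \<in> I \<Longrightarrow> inv x \<in> I"
    "\<And>x h. x \<in> carrier B \<Longrightarrow> h \<in> I \<Longrightarrow> x \<oplus> h \<oplus> \<ominus> x \<in> I"
    "\<And>x h. x \<in> carrier B \<Longrightarrow> h \<in> I \<Longrightarrow> x \<otimes> h \<otimes> inv x \<in> I"
    "\<And>x h. x \<in> carrier B \<Longrightarrow> h \<in> I \<Longrightarrow> lam x h \<in> I"
proof -
  have i: "subbrace B I" "normal I (add_monoid B)" "normal I B" "\<forall>b\<in>carrier B. \<forall>a\<in>I. blambda B b a \<in> I"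
    using assms unfolding bid_def brace_ideal_def by auto
  show sa: "subgroup I (add_monoid B)" and sm: "subgroup I B" using i(1) unfolding subbrace_def by auto
  show "I \<subseteq> carrier B" using asg_sub[OF sa] .
  show "\<zero> \<in> I" using asg_zero[OF sa] .
  show "\<And>x y. x \<in> I \<Longrightarrow> y \<in> I \<Longrightarrow> x \<oplus> y \<in> I" using asg_add[OF sa] .
  show "\<And>x. x \<in> I \<Longrightarrow> \<ominus> x \<in> I" using asg_neg[OF sa] .
  show "\<And>x y. x \<in> I \<Longrightarrow> y \<in> I \<Longrightarrow> x \<otimes> y \<in> I" using subgroup.m_closed[OF sm] .
  show "\<And>x. x \<in> I \<Longrightarrow> inv x \<in> I" using subgroup.m_inv_closed[OF sm] .
  show "\<And>x h. x \<in> carrier B \<Longrightarrow> h \<in> I \<Longrightarrow> x \<oplus> h \<oplus> \<ominus> x \<in> I"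
    using i(2) A.normal_inv_iff by blast
  show "\<And>x h. x \<in> carrier B \<Longrightarrow> h \<in> I \<Longrightarrow> x \<otimes> h \<otimes> inv x \<in> I"
    using i(3) M.normal_inv_iff by blast
  show "\<And>x h. x \<in> carrier B \<Longrightarrow> h \<in> I \<Longrightarrow> lam x h \<in> I"
    using i(4) by (simp add: lam_def)
qed

lemma idealI:
  assumes "subgroup I (add_monoid B)" "subgroup I B"
    "\<And>x h. x \<in> carrier B \<Longrightarrow> h \<in> I \<Longrightarrow> x \<oplus> h \<oplus> \<ominus> x \<in> I"
    "\<And>x h. x \<in> carrier B \<Longrightarrow> h \<in> I \<Longrightarrow> x \<otimes> h \<otimes> inv x \<in> I"
    "\<And>x h. x \<in> carrier B \<Longrightarrow> h \<in> I \<Longrightarrow> lam x h \<in> I"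
  shows "bid I"
  unfolding bid_def brace_ideal_def subbrace_def
  using assms A.normal_inv_iff M.normal_inv_iff by (auto simp: lam_def)

lemma M_zero_l [simp]: "x \<in> carrier B \<Longrightarrow> \<zero> \<otimes> x = x"
  using M.l_one by (metis one_zero)
lemma M_zero_r [simp]: "x \<in> carrier B \<Longrightarrow> x \<otimes> \<zero> = x"
  using M.r_one by (metis one_zero)
lemma M_zero_closed [simp]: "\<zero> \<in> carrier B"
  using M.one_closed by (metis one_zero)

lemma M_cancel1 [simp]: "x \<in> carrier B \<Longrightarrow> y \<in> carrier B \<Longrightarrow> x \<otimes> (inv x \<otimes> y) = y"
  by (metis M.inv_closed M.m_assoc M.r_inv M.l_one)
lemma M_cancel2 [simp]: "x \<in> carrier B \<Longrightarrow> y \<in> carrier B \<Longrightarrow> inv x \<otimes> (x \<otimes> y) = y"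
  by (metis M.inv_closed M.m_assoc M.l_inv M.l_one)

definition md where "md I x y \<longleftrightarrow> x \<in> carrier B \<and> y \<in> carrier B \<and> x \<oplus> \<ominus> y \<in> I"

lemma md_refl: "bid I \<Longrightarrow> x \<in> carrier B \<Longrightarrow> md I x x"
  by (simp add: md_def idealD)

lemma md_carr: "md I x y \<Longrightarrow> x \<in> carrier B" "md I x y \<Longrightarrow> y \<in> carrier B"
  by (auto simp: md_def)

lemma md_sym: "bid I \<Longrightarrow> md I x y \<Longrightarrow> md I y x"
  unfolding md_def using idealD(6)[of I "x \<oplus> \<ominus> y"] by (auto simp: gs)

lemma md_trans[trans]: "bid I \<Longrightarrow> md I x y \<Longrightarrow> md I y z \<Longrightarrow> md I x z"
proof -
  assume I: "bid I" and 1: "md I x y" and 2: "md I y z"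
  have "(x \<oplus> \<ominus> y) \<oplus> (y \<oplus> \<ominus> z) \<in> I" using 1 2 idealD(5)[OF I] unfolding md_def by blast
  thus ?thesis using 1 2 unfolding md_def by (simp add: gs)
qed

lemma md_zero: "bid I \<Longrightarrow> x \<in> carrier B \<Longrightarrow> md I x \<zero> \<longleftrightarrow> x \<in> I"
  by (simp add: md_def)

lemma md_I: "bid I \<Longrightarrow> x \<in> carrier B \<Longrightarrow> y \<in> carrier B \<Longrightarrow> h \<in> I \<Longrightarrow> x = h \<oplus> y \<Longrightarrow> md I x y"
  unfolding md_def using idealD(3)[of I] by (auto simp: gs subsetD)

lemma md_E: "md I x y \<Longrightarrow> \<exists>h\<in>I. x = h \<oplus> y"
  unfolding md_def by (intro bexI[of _ "x \<oplus> \<ominus> y"]) (auto simp: gs)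

lemma md_mono: "I \<subseteq> J \<Longrightarrow> md I x y \<Longrightarrow> md J x y"
  unfolding md_def by auto

lemma md_add: assumes I: "bid I" and 1: "md I x x'" and 2: "md I y y'"
  shows "md I (x \<oplus> y) (x' \<oplus> y')"
proof -
  have c: "x \<in> carrier B" "x' \<in> carrier B" "y \<in> carrier B" "y' \<in> carrier B" using 1 2 md_carr by auto
  have "x \<oplus> (y \<oplus> \<ominus> y') \<oplus> \<ominus> x \<in> I" using idealD(9)[OF I] 2 c unfolding md_def by blast
  hence "(x \<oplus> (y \<oplus> \<ominus> y') \<oplus> \<ominus> x) \<oplus> (x \<oplus> \<ominus> x') \<in> I" using idealD(5)[OF I] 1 unfolding md_def by blast
  thus ?thesis using c unfolding md_def by (simp add: gs)
qed

lemma md_neg: assumes I: "bid I" and 1: "md I x x'"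
  shows "md I (\<ominus> x) (\<ominus> x')"
proof -
  have c: "x \<in> carrier B" "x' \<in> carrier B" using 1 md_carr by auto
  have "\<ominus> (x \<oplus> \<ominus> x') \<in> I" using idealD(6)[OF I] 1 unfolding md_def by blast
  hence "\<ominus> x \<oplus> \<ominus> (x \<oplus> \<ominus> x') \<oplus> \<ominus> (\<ominus> x) \<in> I" using idealD(9)[OF I] c by blast
  thus ?thesis using c unfolding md_def by (simp add: gs)
qed

lemma md_lamR: assumes I: "bid I" and c: "c \<in> carrier B" and 1: "md I y y'"
  shows "md I (lam c y) (lam c y')"
proof -
  have cc: "y \<in> carrier B" "y' \<in> carrier B" using 1 md_carr by auto
  have "lam c (y \<oplus> \<ominus> y') \<in> I" using idealD(11)[OF I] 1 c unfolding md_def by blast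
  thus ?thesis using c cc unfolding md_def by (simp add: lam_add lam_neg)
qed

lemma id_lam_triv: assumes I: "bid I" and k: "k \<in> I" and y: "y \<in> carrier B"
  shows "md I (lam k y) y"
proof -
  have kc: "k \<in> carrier B" using k idealD(3)[OF I] by auto
  define k' where "k' = inv y \<otimes> k \<otimes> inv (inv y)"
  have k': "k' \<in> I" unfolding k'_def using idealD(10)[OF I, of "inv y" k] k y by auto
  have k'c: "k' \<in> carrier B" using k' idealD(3)[OF I] by auto
  have "k \<otimes> y = y \<otimes> k'" using kc y unfolding k'_def by (simp add: M.m_assoc)
  hence e: "k \<oplus> lam k y = y \<oplus> lam y k'" using kc y k'c by (simp add: mult_lam)
  have "lam k y = \<ominus> k \<oplus> (y \<oplus> lam y k')"
    using e kc y k'c by (metis A_cancel2 lam_closed)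
  hence "lam k y \<oplus> \<ominus> y = \<ominus> k \<oplus> (y \<oplus> lam y k' \<oplus> \<ominus> y)" using kc y k'c by (simp add: gs)
  moreover have "\<ominus> k \<oplus> (y \<oplus> lam y k' \<oplus> \<ominus> y) \<in> I"
  proof -
    have "lam y k' \<in> I" using idealD(11)[OF I y k'] .
    hence "y \<oplus> lam y k' \<oplus> \<ominus> y \<in> I" using idealD(9)[OF I y] by blast
    thus ?thesis using idealD(5)[OF I idealD(6)[OF I k]] by blast
  qed
  ultimately show ?thesis using kc y unfolding md_def by simp
qed

lemma md_lamL: assumes I: "bid I" and y: "y \<in> carrier B" and 1: "md I x x'"
  shows "md I (lam x y) (lam x' y)"
proof -
  have c: "x \<in> carrier B" "x' \<in> carrier B" using 1 md_carr by auto
  obtain h where h: "h \<in> I" "x = h \<oplus> x'" using md_E[OF 1] by blast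
  have hc: "h \<in> carrier B" using h idealD(3)[OF I] by auto
  define h' where "h' = \<ominus> x' \<oplus> h \<oplus> \<ominus> (\<ominus> x')"
  have h': "h' \<in> I" unfolding h'_def using idealD(9)[OF I, of "\<ominus> x'" h] h c by auto
  have h'c: "h' \<in> carrier B" using h' idealD(3)[OF I] by auto
  define k where "k = lam (inv x') h'"
  have k: "k \<in> I" unfolding k_def using idealD(11)[OF I] h' c by auto
  have kc: "k \<in> carrier B" using k idealD(3)[OF I] by auto
  have "x' \<otimes> k = x' \<oplus> h'" using c h'c by (simp add: mult_lam k_def)
  also have "\<dots> = x" using h c hc by (simp add: h'_def gs)
  finally have xk: "x = x' \<otimes> k" by simp
  have "lam x y = lam x' (lam k y)" using xk c kc y by (simp add: lam_mult)
  moreover have "md I (lam x' (lam k y)) (lam x' y)"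
    by (rule md_lamR[OF I c(2) id_lam_triv[OF I k y]])
  ultimately show ?thesis by simp
qed

lemma md_mult: assumes I: "bid I" and 1: "md I x x'" and 2: "md I y y'"
  shows "md I (x \<otimes> y) (x' \<otimes> y')"
proof -
  have c: "x \<in> carrier B" "x' \<in> carrier B" "y \<in> carrier B" "y' \<in> carrier B" using 1 2 md_carr by auto
  have "md I (lam x y) (lam x' y)" by (rule md_lamL[OF I c(3) 1])
  moreover have "md I (lam x' y) (lam x' y')" by (rule md_lamR[OF I c(2) 2])
  ultimately have "md I (lam x y) (lam x' y')" using md_trans[OF I] by blast
  hence "md I (x \<oplus> lam x y) (x' \<oplus> lam x' y')" using md_add[OF I 1] by blast
  thus ?thesis using c by (simp add: mult_lam)
qed

lemma md_inv: assumes I: "bid I" and 1: "md I x x'"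
  shows "md I (inv x) (inv x')"
proof -
  have c: "x \<in> carrier B" "x' \<in> carrier B" using 1 md_carr by auto
  have ix: "md I (inv x) (inv x)" "md I (inv x') (inv x')" using md_refl[OF I] c by auto
  have "md I (inv x \<otimes> x' \<otimes> inv x') (inv x \<otimes> x \<otimes> inv x')"
    by (rule md_mult[OF I md_mult[OF I ix(1) md_sym[OF I 1]] ix(2)])
  thus ?thesis using c by (simp add: M.m_assoc)
qed

lemma md_closed_add: "bid I \<Longrightarrow> subgroup T (add_monoid B) \<Longrightarrow> I \<subseteq> T \<Longrightarrow> md I x y \<Longrightarrow> y \<in> T \<Longrightarrow> x \<in> T"
proof -
  assume I: "bid I" and T: "subgroup T (add_monoid B)" and IT: "I \<subseteq> T" and 1: "md I x y" and y: "y \<in> T"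
  obtain h where "h \<in> I" "x = h \<oplus> y" using md_E[OF 1] by blast
  thus ?thesis using asg_add[OF T] IT y by auto
qed

lemma md_closed_mult: "bid I \<Longrightarrow> subgroup T B \<Longrightarrow> I \<subseteq> T \<Longrightarrow> md I x y \<Longrightarrow> y \<in> T \<Longrightarrow> x \<in> T"
proof -
  assume I: "bid I" and T: "subgroup T B" and IT: "I \<subseteq> T" and 1: "md I x y" and y: "y \<in> T"
  have c: "x \<in> carrier B" "y \<in> carrier B" using 1 md_carr by auto
  have "md I (inv y \<otimes> x) (inv y \<otimes> y)" by (rule md_mult[OF I md_refl[OF I] 1]) (simp add: c)
  hence "md I (inv y \<otimes> x) \<zero>" using c by simp
  hence "inv y \<otimes> x \<in> I" using c md_zero[OF I] by simp
  hence "y \<otimes> (inv y \<otimes> x) \<in> T" using IT y subgroup.m_closed[OF T] by blast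
  thus ?thesis using c by (simp flip: M.m_assoc)
qed

end

context br begin

definition cen where "cen I a \<longleftrightarrow> a \<in> carrier B \<and>
  (\<forall>b\<in>carrier B. md I (lam a b) b \<and> md I (a \<oplus> b) (b \<oplus> a) \<and> md I (lam b a) a)"

lemma cenD: assumes "cen I a" "b \<in> carrier B"
  shows "a \<in> carrier B" "md I (lam a b) b" "md I (a \<oplus> b) (b \<oplus> a)" "md I (lam b a) a"
  using assms unfolding cen_def by auto

lemma cen_mono: "I \<subseteq> J \<Longrightarrow> cen I a \<Longrightarrow> cen J a"
  unfolding cen_def using md_mono by blast

lemma cen_elem: assumes I: "bid I" and a: "a \<in> I" shows "cen I a"
proof -
  have ac: "a \<in> carrier B" using a idealD(3)[OF I] by auto
  show ?thesis unfolding cen_def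
  proof (intro conjI ballI ac)
    fix b assume b: "b \<in> carrier B"
    show "md I (lam a b) b" by (rule id_lam_triv[OF I a b])
    have "b \<oplus> \<ominus> a \<oplus> \<ominus> b \<in> I" using idealD(9)[OF I b idealD(6)[OF I a]] .
    hence "a \<oplus> (b \<oplus> \<ominus> a \<oplus> \<ominus> b) \<in> I" using idealD(5)[OF I a] by blast
    thus "md I (a \<oplus> b) (b \<oplus> a)" using ac b unfolding md_def by (simp add: gs)
    have "lam b a \<in> I" using idealD(11)[OF I b a] .
    hence "lam b a \<oplus> \<ominus> a \<in> I" using idealD(5)[OF I _ idealD(6)[OF I a]] by blast
    thus "md I (lam b a) a" using ac b unfolding md_def by simp
  qed
qed

lemma cen_comm: assumes I: "bid I" and a: "cen I a" and b: "b \<in> carrier B"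
  shows "md I (a \<otimes> b) (b \<otimes> a)"
proof -
  have ac: "a \<in> carrier B" using cenD[OF a b] by simp
  have "md I (a \<oplus> lam a b) (a \<oplus> b)" using md_add[OF I md_refl[OF I ac] cenD(2)[OF a b]] .
  moreover have "md I (a \<oplus> b) (b \<oplus> a)" using cenD(3)[OF a b] .
  moreover have "md I (b \<oplus> a) (b \<oplus> lam b a)" using md_add[OF I md_refl[OF I b] md_sym[OF I cenD(4)[OF a b]]] .
  ultimately have "md I (a \<oplus> lam a b) (b \<oplus> lam b a)" using md_trans[OF I] by blast
  thus ?thesis using ac b by (simp add: mult_lam)
qed

lemma CL: assumes I: "bid I" and T: "subgroup T (add_monoid B)" and IT: "I \<subseteq> T"
  and cT: "\<And>t. t \<in> T \<Longrightarrow> cen I t"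
  shows "bid T"
proof -
  have Tc: "T \<subseteq> carrier B" using asg_sub[OF T] .
  have ms: "subgroup T B"
  proof (rule M.subgroupI)
    show "T \<subseteq> carrier B" by fact
    show "T \<noteq> {}" using asg_zero[OF T] by blast
  next
    fix t assume t: "t \<in> T"
    have tc: "t \<in> carrier B" using t Tc by auto
    have "md I (lam t (inv t)) (inv t)" using cenD(2)[OF cT[OF t]] tc by simp
    hence "md I (inv t) (\<ominus> t)" using md_sym[OF I] neg_lam[OF tc] by simp
    thus "inv t \<in> T" using md_closed_add[OF I T IT] asg_neg[OF T t] by blast
  next
    fix t t' assume t: "t \<in> T" and t': "t' \<in> T"
    have tc: "t \<in> carrier B" "t' \<in> carrier B" using t t' Tc by auto
    have "lam t t' \<in> T" using md_closed_add[OF I T IT cenD(2)[OF cT[OF t] tc(2)] t'] .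
    hence "t \<oplus> lam t t' \<in> T" using asg_add[OF T t] by blast
    thus "t \<otimes> t' \<in> T" using tc by (simp add: mult_lam)
  qed
  show ?thesis
  proof (rule idealI[OF T ms])
    fix x t assume x: "x \<in> carrier B" and t: "t \<in> T"
    have tc: "t \<in> carrier B" using t Tc by auto
    have "md I (x \<oplus> t \<oplus> \<ominus> x) (t \<oplus> x \<oplus> \<ominus> x)"
      using md_add[OF I md_sym[OF I cenD(3)[OF cT[OF t] x]] md_refl[OF I A.inv_closed[OF x]]] .
    hence "md I (x \<oplus> t \<oplus> \<ominus> x) t" using x tc by (simp add: gs)
    thus "x \<oplus> t \<oplus> \<ominus> x \<in> T" using md_closed_add[OF I T IT] t by blast
    have "md I (x \<otimes> t \<otimes> inv x) (t \<otimes> x \<otimes> inv x)"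
      using md_mult[OF I md_sym[OF I cen_comm[OF I cT[OF t] x]] md_refl[OF I M.inv_closed[OF x]]] .
    hence "md I (x \<otimes> t \<otimes> inv x) t" using x tc by (simp add: M.m_assoc)
    thus "x \<otimes> t \<otimes> inv x \<in> T" using md_closed_add[OF I T IT] t by blast
    show "lam x t \<in> T" using md_closed_add[OF I T IT cenD(4)[OF cT[OF t] x] t] .
  qed
qed

lemma CL': assumes I: "bid I" and T: "subgroup T B" and IT: "I \<subseteq> T"
  and cT: "\<And>t. t \<in> T \<Longrightarrow> cen I t"
  shows "subgroup T (add_monoid B)"
proof -
  have Tc: "T \<subseteq> carrier B" using subgroup.subset[OF T] .
  show ?thesis
  proof (rule asgI[OF Tc msg_zero[OF T]])
    fix t t' assume t: "t \<in> T" and t': "t' \<in> T"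
    have tc: "t \<in> carrier B" "t' \<in> carrier B" using t t' Tc by auto
    have it: "inv t \<in> T" using subgroup.m_inv_closed[OF T t] .
    have "lam (inv t) t' \<in> T" using md_closed_mult[OF I T IT cenD(2)[OF cT[OF it] tc(2)] t'] .
    hence "t \<otimes> lam (inv t) t' \<in> T" using subgroup.m_closed[OF T t] by blast
    thus "t \<oplus> t' \<in> T" using tc by (simp add: add_mult)
  next
    fix t assume t: "t \<in> T"
    have tc: "t \<in> carrier B" using t Tc by auto
    have it: "inv t \<in> T" using subgroup.m_inv_closed[OF T t] .
    have "md I (lam t (inv t)) (inv t)" using cenD(2)[OF cT[OF t]] tc by simp
    hence "md I (\<ominus> t) (inv t)" using neg_lam[OF tc] by simp
    thus "\<ominus> t \<in> T" using md_closed_mult[OF I T IT] it by blast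
  qed
qed

lemma cen_zero: "bid I \<Longrightarrow> cen I \<zero>"
  unfolding cen_def using md_refl by auto

lemma cen_add: assumes I: "bid I" and a: "cen I a" and a': "cen I a'"
  shows "cen I (a \<oplus> a')"
proof -
  have ac: "a \<in> carrier B" "a' \<in> carrier B" using a a' unfolding cen_def by auto
  note tr = md_trans[OF I]
  show ?thesis unfolding cen_def
  proof (intro conjI ballI)
    show "a \<oplus> a' \<in> carrier B" using ac by simp
    fix b assume b: "b \<in> carrier B"
    define a'' where "a'' = lam (inv a) a'"
    have a''c: "a'' \<in> carrier B" using ac by (simp add: a''_def)
    have e: "a \<oplus> a' = a \<otimes> a''" unfolding a''_def using ac by (rule add_mult)
    have "md I a'' a'" unfolding a''_def using cenD(4)[OF a'] ac by simp
    hence 1: "md I (lam a'' b) (lam a' b)" using md_lamL[OF I b] by blast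
    have "md I (lam a'' b) b" using tr[OF 1 cenD(2)[OF a' b]] .
    hence "md I (lam a (lam a'' b)) (lam a b)" using md_lamR[OF I ac(1)] by blast
    hence "md I (lam a (lam a'' b)) b" using tr cenD(2)[OF a b] by blast
    thus "md I (lam (a \<oplus> a') b) b" using e ac a''c b by (simp add: lam_mult)
    have "md I (a \<oplus> (a' \<oplus> b)) (a \<oplus> (b \<oplus> a'))" using md_add[OF I md_refl[OF I ac(1)] cenD(3)[OF a' b]] .
    moreover have "md I ((a \<oplus> b) \<oplus> a') ((b \<oplus> a) \<oplus> a')" using md_add[OF I cenD(3)[OF a b] md_refl[OF I ac(2)]] .
    ultimately show "md I (a \<oplus> a' \<oplus> b) (b \<oplus> (a \<oplus> a'))" using tr ac b by (simp add: gs)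
    have "md I (lam b a \<oplus> lam b a') (a \<oplus> a')" using md_add[OF I cenD(4)[OF a b] cenD(4)[OF a' b]] .
    thus "md I (lam b (a \<oplus> a')) (a \<oplus> a')" using ac b by (simp add: lam_add)
  qed
qed

lemma cen_neg: assumes I: "bid I" and a: "cen I a"
  shows "cen I (\<ominus> a)"
proof -
  have ac: "a \<in> carrier B" using a unfolding cen_def by auto
  note tr = md_trans[OF I]
  show ?thesis unfolding cen_def
  proof (intro conjI ballI)
    show "\<ominus> a \<in> carrier B" using ac by simp
    fix b assume b: "b \<in> carrier B"
    have "md I (lam a (inv a)) (inv a)" using cenD(2)[OF a] ac by simp
    hence "md I (\<ominus> a) (inv a)" using neg_lam[OF ac] by simp
    hence 1: "md I (lam (\<ominus> a) b) (lam (inv a) b)" using md_lamL[OF I b] by blast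
    have "md I (lam a (lam (inv a) b)) (lam (inv a) b)" by (rule cenD(2)[OF a]) (simp add: ac b)
    hence "md I b (lam (inv a) b)" using ac b by simp
    thus "md I (lam (\<ominus> a) b) b" using tr[OF 1] md_sym[OF I] by blast
    have "md I (\<ominus> a \<oplus> (a \<oplus> b) \<oplus> \<ominus> a) (\<ominus> a \<oplus> (b \<oplus> a) \<oplus> \<ominus> a)"
      using md_add[OF I md_add[OF I md_refl[OF I A.inv_closed[OF ac]] cenD(3)[OF a b]] md_refl[OF I A.inv_closed[OF ac]]] .
    hence "md I (b \<oplus> \<ominus> a) (\<ominus> a \<oplus> b)" using ac b by (simp add: gs)
    thus "md I (\<ominus> a \<oplus> b) (b \<oplus> \<ominus> a)" using md_sym[OF I] by blast
    have "md I (\<ominus> lam b a) (\<ominus> a)" using md_neg[OF I cenD(4)[OF a b]] .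
    thus "md I (lam b (\<ominus> a)) (\<ominus> a)" using ac b by (simp add: lam_neg)
  qed
qed

lemma Zideal: assumes I: "bid I" shows "bid {a. cen I a}"
proof (rule CL[OF I])
  show "subgroup {a. cen I a} (add_monoid B)"
  proof (rule asgI)
    show "{a. cen I a} \<subseteq> carrier B" unfolding cen_def by auto
    show "\<zero> \<in> {a. cen I a}" using cen_zero[OF I] by simp
    show "\<And>x y. x \<in> {a. cen I a} \<Longrightarrow> y \<in> {a. cen I a} \<Longrightarrow> x \<oplus> y \<in> {a. cen I a}"
      using cen_add[OF I] by simp
    show "\<And>x. x \<in> {a. cen I a} \<Longrightarrow> \<ominus> x \<in> {a. cen I a}"
      using cen_neg[OF I] by simp
  qed
  show "I \<subseteq> {a. cen I a}" using cen_elem[OF I] by blast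
qed auto

end

context br begin

lemma coset_mem: "bid I \<Longrightarrow> a \<in> carrier B \<Longrightarrow> x \<in> I +> a \<longleftrightarrow> md I x a"
  unfolding a_r_coset_def' using md_E md_I[of I] idealD(3)[of I] by (auto simp: subsetD)

lemma coset_eq: assumes I: "bid I" and a: "a \<in> carrier B" and b: "b \<in> carrier B"
  shows "I +> a = I +> b \<longleftrightarrow> md I a b"
proof
  assume "I +> a = I +> b"
  moreover have "a \<in> I +> a" using coset_mem[OF I a] md_refl[OF I a] by simp
  ultimately show "md I a b" using coset_mem[OF I b] by simp
next
  assume ab: "md I a b"
  show "I +> a = I +> b"
    using coset_mem[OF I a] coset_mem[OF I b] md_trans[OF I] md_sym[OF I] ab by blast
qed

lemma coset_carr: "bid I \<Longrightarrow> a \<in> carrier B \<Longrightarrow> I +> a \<subseteq> carrier B"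
  using coset_mem md_carr by blast

abbreviation "Q I \<equiv> brace_quot B I"

lemma carrier_Q: "carrier (Q I) = {I +> a | a. a \<in> carrier B}"
  unfolding brace_quot_def A_RCOSETS_def RCOSETS_def a_r_coset_def by auto

lemma zero_Q: "bid I \<Longrightarrow> ring.zero (Q I) = I +> \<zero>"
proof -
  assume I: "bid I"
  have "I +> \<zero> = I" using coset_mem[OF I] md_zero[OF I] idealD(3)[OF I] md_carr by blast
  thus ?thesis unfolding brace_quot_def by simp
qed

lemma add_Q: assumes I: "bid I" and a: "a \<in> carrier B" and b: "b \<in> carrier B"
  shows "ring.add (Q I) (I +> a) (I +> b) = I +> (a \<oplus> b)"
proof -
  have "set_add B (I +> a) (I +> b) = I +> (a \<oplus> b)"
  proof (rule Set.set_eqI)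
    fix z
    show "z \<in> set_add B (I +> a) (I +> b) \<longleftrightarrow> z \<in> I +> (a \<oplus> b)"
    proof
      assume "z \<in> set_add B (I +> a) (I +> b)"
      then obtain x y where "x \<in> I +> a" "y \<in> I +> b" "z = x \<oplus> y"
        unfolding set_add_def set_mult_def by auto
      thus "z \<in> I +> (a \<oplus> b)" using coset_mem[OF I] a b md_add[OF I] by auto
    next
      assume "z \<in> I +> (a \<oplus> b)"
      hence z: "md I z (a \<oplus> b)" using coset_mem[OF I] a b by auto
      have zc: "z \<in> carrier B" using md_carr[OF z] by simp
      have "md I (z \<oplus> \<ominus> b) (a \<oplus> b \<oplus> \<ominus> b)" using md_add[OF I z md_refl[OF I A.inv_closed[OF b]]] .
      hence "z \<oplus> \<ominus> b \<in> I +> a" using coset_mem[OF I a] a b by (simp add: gs)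
      moreover have "b \<in> I +> b" using coset_mem[OF I b] md_refl[OF I b] by simp
      moreover have "z = (z \<oplus> \<ominus> b) \<oplus> b" using zc b by (simp add: gs)
      ultimately show "z \<in> set_add B (I +> a) (I +> b)"
        unfolding set_add_def set_mult_def by auto
    qed
  qed
  thus ?thesis unfolding brace_quot_def by simp
qed

lemma mult_Q: assumes I: "bid I" and a: "a \<in> carrier B" and b: "b \<in> carrier B"
  shows "monoid.mult (Q I) (I +> a) (I +> b) = I +> (a \<otimes> b)"
proof -
  have "set_mult B (I +> a) (I +> b) = I +> (a \<otimes> b)"
  proof (rule Set.set_eqI)
    fix z
    show "z \<in> set_mult B (I +> a) (I +> b) \<longleftrightarrow> z \<in> I +> (a \<otimes> b)"
    proof
      assume "z \<in> set_mult B (I +> a) (I +> b)"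
      then obtain x y where "x \<in> I +> a" "y \<in> I +> b" "z = x \<otimes> y"
        unfolding set_mult_def by auto
      thus "z \<in> I +> (a \<otimes> b)" using coset_mem[OF I] a b md_mult[OF I] by auto
    next
      assume "z \<in> I +> (a \<otimes> b)"
      hence z: "md I z (a \<otimes> b)" using coset_mem[OF I] a b by auto
      have zc: "z \<in> carrier B" using md_carr[OF z] by simp
      have "md I (z \<otimes> inv b) (a \<otimes> b \<otimes> inv b)" using md_mult[OF I z md_refl[OF I M.inv_closed[OF b]]] .
      hence "z \<otimes> inv b \<in> I +> a" using coset_mem[OF I a] a b by (simp add: M.m_assoc)
      moreover have "b \<in> I +> b" using coset_mem[OF I b] md_refl[OF I b] by simp
      moreover have "z = (z \<otimes> inv b) \<otimes> b" using zc b by (simp add: M.m_assoc)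
      ultimately show "z \<in> set_mult B (I +> a) (I +> b)"
        unfolding set_mult_def by auto
    qed
  qed
  thus ?thesis unfolding brace_quot_def by simp
qed

lemma neg_Q: assumes I: "bid I" and a: "a \<in> carrier B"
  shows "a_inv (Q I) (I +> a) = I +> (\<ominus> a)"
proof -
  have z: "ring.zero (Q I) = I +> \<zero>" using zero_Q[OF I] .
  show ?thesis unfolding a_inv_def[of "Q I"] m_inv_def[of "add_monoid (Q I)"]
  proof (rule the_equality, goal_cases)
    case 1
    show ?case using a by (auto simp: carrier_Q add_Q[OF I] z)
  next
    case (2 Y)
    then obtain c where c: "c \<in> carrier B" "Y = I +> c" "I +> (a \<oplus> c) = I +> \<zero>"
      using a by (auto simp: carrier_Q add_Q[OF I] z)
    hence "md I (a \<oplus> c) \<zero>" using coset_eq[OF I] a by simp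
    hence "md I (\<ominus> a \<oplus> (a \<oplus> c)) (\<ominus> a \<oplus> \<zero>)" using md_add[OF I md_refl[OF I A.inv_closed[OF a]]] by blast
    hence "md I c (\<ominus> a)" using a c by simp
    thus "Y = I +> \<ominus> a" using c coset_eq[OF I] a by simp
  qed
qed

lemma lam_Q: assumes I: "bid I" and a: "a \<in> carrier B" and b: "b \<in> carrier B"
  shows "blambda (Q I) (I +> a) (I +> b) = I +> (lam a b)"
  unfolding blambda_def using a b
  by (simp add: neg_Q[OF I] mult_Q[OF I] add_Q[OF I] lam_def')

lemma ball_Q: "(\<forall>Y\<in>carrier (Q I). P Y) \<longleftrightarrow> (\<forall>b\<in>carrier B. P (I +> b))"
  by (auto simp: carrier_Q)

lemma socle_Q: assumes I: "bid I" and a: "a \<in> carrier B"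
  shows "I +> a \<in> socle (Q I) \<longleftrightarrow> (\<forall>b\<in>carrier B. md I (lam a b) b \<and> md I (a \<oplus> b) (b \<oplus> a))"
proof -
  have c: "I +> a \<in> carrier (Q I)" using a by (auto simp: carrier_Q)
  have "I +> a \<in> socle (Q I) \<longleftrightarrow> (\<forall>b\<in>carrier B. I +> lam a b = I +> b) \<and> (\<forall>b\<in>carrier B. I +> (a \<oplus> b) = I +> (b \<oplus> a))"
  proof -
    have e1: "\<And>b. b \<in> carrier B \<Longrightarrow> blambda (Q I) (I +> a) (I +> b) = I +> lam a b" using lam_Q[OF I a] .
    have e2: "\<And>b. b \<in> carrier B \<Longrightarrow> ring.add (Q I) (I +> a) (I +> b) = I +> (a \<oplus> b)" using add_Q[OF I a] .
    have e3: "\<And>b. b \<in> carrier B \<Longrightarrow> ring.add (Q I) (I +> b) (I +> a) = I +> (b \<oplus> a)" using add_Q[OF I _ a] .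
    have "I +> a \<in> socle (Q I) \<longleftrightarrow> (\<forall>b\<in>carrier B. blambda (Q I) (I +> a) (I +> b) = I +> b) \<and>
       (\<forall>b\<in>carrier B. ring.add (Q I) (I +> a) (I +> b) = ring.add (Q I) (I +> b) (I +> a))"
      unfolding socle_def ball_Q using c by blast
    also have "\<dots> \<longleftrightarrow> (\<forall>b\<in>carrier B. I +> lam a b = I +> b) \<and> (\<forall>b\<in>carrier B. I +> (a \<oplus> b) = I +> (b \<oplus> a))"
      using e1 e2 e3 by (intro conj_cong ball_cong) auto
    finally show ?thesis .
  qed
  also have "\<dots> \<longleftrightarrow> (\<forall>b\<in>carrier B. md I (lam a b) b \<and> md I (a \<oplus> b) (b \<oplus> a))"
    using a by (auto simp: coset_eq[OF I])
  finally show ?thesis .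
qed

lemma bcentre_Q: assumes I: "bid I" and a: "a \<in> carrier B"
  shows "I +> a \<in> bcentre (Q I) \<longleftrightarrow> cen I a"
proof -
  have "I +> a \<in> bcentre (Q I) \<longleftrightarrow> (\<forall>b\<in>carrier B. md I (lam a b) b \<and> md I (a \<oplus> b) (b \<oplus> a)) \<and>
     (\<forall>b\<in>carrier B. I +> (a \<otimes> b) = I +> (b \<otimes> a))"
  proof -
    have e1: "\<And>b. b \<in> carrier B \<Longrightarrow> monoid.mult (Q I) (I +> a) (I +> b) = I +> (a \<otimes> b)" using mult_Q[OF I a] .
    have e2: "\<And>b. b \<in> carrier B \<Longrightarrow> monoid.mult (Q I) (I +> b) (I +> a) = I +> (b \<otimes> a)" using mult_Q[OF I _ a] .
    have "I +> a \<in> bcentre (Q I) \<longleftrightarrow> I +> a \<in> socle (Q I) \<and>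
       (\<forall>b\<in>carrier B. monoid.mult (Q I) (I +> a) (I +> b) = monoid.mult (Q I) (I +> b) (I +> a))"
      unfolding bcentre_def ball_Q by blast
    also have "\<dots> \<longleftrightarrow> (\<forall>b\<in>carrier B. md I (lam a b) b \<and> md I (a \<oplus> b) (b \<oplus> a)) \<and>
     (\<forall>b\<in>carrier B. I +> (a \<otimes> b) = I +> (b \<otimes> a))"
      using e1 e2 socle_Q[OF I a] by (intro conj_cong ball_cong) auto
    finally show ?thesis .
  qed
  also have "\<dots> \<longleftrightarrow> (\<forall>b\<in>carrier B. md I (lam a b) b \<and> md I (a \<oplus> b) (b \<oplus> a)) \<and>
     (\<forall>b\<in>carrier B. md I (a \<otimes> b) (b \<otimes> a))"
    using a by (intro conj_cong ball_cong refl) (simp_all add: coset_eq[OF I])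
  also have "\<dots> \<longleftrightarrow> cen I a"
  proof
    assume h: "(\<forall>b\<in>carrier B. md I (lam a b) b \<and> md I (a \<oplus> b) (b \<oplus> a)) \<and>
     (\<forall>b\<in>carrier B. md I (a \<otimes> b) (b \<otimes> a))"
    show "cen I a" unfolding cen_def
    proof (intro conjI ballI a)
      fix b assume b: "b \<in> carrier B"
      show "md I (lam a b) b" "md I (a \<oplus> b) (b \<oplus> a)" using h b by simp_all
      note tr = md_trans[OF I]
      have "md I (a \<otimes> b) (b \<otimes> a)" using h b by blast
      hence "md I (b \<otimes> a) (a \<otimes> b)" using md_sym[OF I] by blast
      hence "md I (b \<oplus> lam b a) (a \<otimes> b)" using a b by (simp add: mult_lam)
      moreover have "md I (a \<oplus> lam a b) (a \<oplus> b)" using md_add[OF I md_refl[OF I a]] h b by blast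
      hence "md I (a \<otimes> b) (a \<oplus> b)" using a b by (simp add: mult_lam)
      moreover have "md I (a \<oplus> b) (b \<oplus> a)" using h b by blast
      ultimately have "md I (b \<oplus> lam b a) (b \<oplus> a)" using tr by metis
      hence "md I (\<ominus> b \<oplus> (b \<oplus> lam b a)) (\<ominus> b \<oplus> (b \<oplus> a))"
        using md_add[OF I md_refl[OF I A.inv_closed[OF b]]] by blast
      thus "md I (lam b a) a" using a b by simp
    qed
  next
    assume "cen I a" thus "(\<forall>b\<in>carrier B. md I (lam a b) b \<and> md I (a \<oplus> b) (b \<oplus> a)) \<and>
     (\<forall>b\<in>carrier B. md I (a \<otimes> b) (b \<otimes> a))"
      using cen_comm[OF I] cenD(2,3)[of I a] by simp
  qed
  finally show ?thesis .
qed

lemma bid_zero: "bid {\<zero>}"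
proof (rule idealI)
  show "subgroup {\<zero>} (add_monoid B)" by (rule asgI) auto
  show "subgroup {\<zero>} B" using M.triv_subgroup by simp
qed auto

lemma cen_carr: "cen I a \<Longrightarrow> a \<in> carrier B"
  unfolding cen_def by simp

lemma zeta: "bid (zeta_series B k) \<and> zeta_series B (Suc k) = {a. cen (zeta_series B k) a}"
proof (induction k)
  case 0
  have I: "bid (zeta_series B 0)" using bid_zero by simp
  have "zeta_series B (Suc 0) = {a \<in> carrier B. zeta_series B 0 +> a \<in> bcentre (Q (zeta_series B 0))}" by simp
  also have "\<dots> = {a. cen (zeta_series B 0) a}" using bcentre_Q[OF I] cen_carr by blast
  finally show ?case using I by simp
next
  case (Suc k)
  have I: "bid (zeta_series B (Suc k))" using Suc Zideal by simp
  have "zeta_series B (Suc (Suc k)) = {a \<in> carrier B. zeta_series B (Suc k) +> a \<in> bcentre (Q (zeta_series B (Suc k)))}"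
    by (simp only: zeta_series.simps)
  also have "\<dots> = {a. cen (zeta_series B (Suc k)) a}" using bcentre_Q[OF I] cen_carr by blast
  finally show ?case using I by simp
qed

end

context br begin

definition "f1 a b = lam a b \<oplus> \<ominus> b"
definition "f2 a b = (a \<oplus> b) \<oplus> \<ominus> (b \<oplus> a)"
definition "f3 a b = lam b a \<oplus> \<ominus> a"

lemma f_closed [simp]: "a \<in> carrier B \<Longrightarrow> b \<in> carrier B \<Longrightarrow> f1 a b \<in> carrier B"
  "a \<in> carrier B \<Longrightarrow> b \<in> carrier B \<Longrightarrow> f2 a b \<in> carrier B"
  "a \<in> carrier B \<Longrightarrow> b \<in> carrier B \<Longrightarrow> f3 a b \<in> carrier B"
  by (auto simp: f1_def f2_def f3_def)

lemma cen_f: "cen I a \<longleftrightarrow> a \<in> carrier B \<and> (\<forall>b\<in>carrier B. f1 a b \<in> I \<and> f2 a b \<in> I \<and> f3 a b \<in> I)"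
  unfolding cen_def md_def f1_def f2_def f3_def by auto

definition "Xs A = {f1 a b | a b. a \<in> A \<and> b \<in> carrier B} \<union> {f2 a b | a b. a \<in> A \<and> b \<in> carrier B}
   \<union> {f3 a b | a b. a \<in> A \<and> b \<in> carrier B}"

definition "idealgen S0 = \<Inter>{I. bid I \<and> S0 \<subseteq> I}"

lemma bid_carrier: "bid (carrier B)"
  by (rule idealI) (auto simp: A.subgroup_self M.subgroup_self)

lemma bid_Inter: assumes F: "F \<noteq> {}" "\<And>I. I \<in> F \<Longrightarrow> bid I" shows "bid (\<Inter>F)"
proof (rule idealI)
  show "subgroup (\<Inter>F) (add_monoid B)" using A.subgroups_Inter[of F] F idealD(1) by blast
  show "subgroup (\<Inter>F) B" using M.subgroups_Inter[of F] F idealD(2) by blast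
  show "\<And>x h. x \<in> carrier B \<Longrightarrow> h \<in> \<Inter> F \<Longrightarrow> x \<oplus> h \<oplus> \<ominus> x \<in> \<Inter> F" using F idealD(9) by blast
  show "\<And>x h. x \<in> carrier B \<Longrightarrow> h \<in> \<Inter> F \<Longrightarrow> x \<otimes> h \<otimes> inv x \<in> \<Inter> F" using F idealD(10) by blast
  show "\<And>x h. x \<in> carrier B \<Longrightarrow> h \<in> \<Inter> F \<Longrightarrow> lam x h \<in> \<Inter> F" using F idealD(11) by blast
qed

lemma idealgen: assumes X: "S0 \<subseteq> carrier B"
  shows "bid (idealgen S0)" "S0 \<subseteq> idealgen S0" "\<And>J. bid J \<Longrightarrow> S0 \<subseteq> J \<Longrightarrow> idealgen S0 \<subseteq> J"
proof -
  show "bid (idealgen S0)" unfolding idealgen_def using bid_carrier X by (intro bid_Inter) auto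
  show "S0 \<subseteq> idealgen S0" unfolding idealgen_def by auto
  show "\<And>J. bid J \<Longrightarrow> S0 \<subseteq> J \<Longrightarrow> idealgen S0 \<subseteq> J" unfolding idealgen_def by auto
qed

lemma Xs_carr: "A \<subseteq> carrier B \<Longrightarrow> Xs A \<subseteq> carrier B"
  unfolding Xs_def by auto

primrec Gam where
  "Gam 0 = carrier B"
| "Gam (Suc n) = idealgen (Xs (Gam n))"

lemma Gam_carr: "Gam n \<subseteq> carrier B"
proof (induction n)
  case (Suc n) thus ?case using idealgen(3)[OF Xs_carr[OF Suc] bid_carrier] Xs_carr[OF Suc] by simp
qed simp

lemma Gam_bid: "bid (Gam n)"
proof (cases n)
  case 0 thus ?thesis using bid_carrier by simp
next
  case (Suc m)
  thus ?thesis using idealgen(1)[OF Xs_carr[OF Gam_carr]] by simp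
qed

lemma Gam_cen: "a \<in> Gam n \<Longrightarrow> cen (Gam (Suc n)) a"
proof -
  assume a: "a \<in> Gam n"
  have "Xs (Gam n) \<subseteq> Gam (Suc n)" using idealgen(2)[OF Xs_carr[OF Gam_carr]] by simp
  thus ?thesis unfolding cen_f Xs_def using a Gam_carr by blast
qed

lemma Gam_min: "bid J \<Longrightarrow> (\<And>a. a \<in> Gam n \<Longrightarrow> cen J a) \<Longrightarrow> Gam (Suc n) \<subseteq> J"
proof -
  assume J: "bid J" and c: "\<And>a. a \<in> Gam n \<Longrightarrow> cen J a"
  have "Xs (Gam n) \<subseteq> J" unfolding Xs_def using c cen_f by blast
  thus ?thesis using idealgen(3)[OF Xs_carr[OF Gam_carr] J] by simp
qed

lemma Gam_dec: "Gam (Suc n) \<subseteq> Gam n"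
  using Gam_min[OF Gam_bid cen_elem[OF Gam_bid]] by blast

lemma Gam_zeta: assumes c: "zeta_series B c = carrier B"
  shows "i \<le> c \<Longrightarrow> Gam i \<subseteq> zeta_series B (c - i)"
proof (induction i)
  case 0 thus ?case using c by simp
next
  case (Suc i)
  have ci: "c - i = Suc (c - Suc i)" using Suc.prems by simp
  have "Gam i \<subseteq> zeta_series B (Suc (c - Suc i))" using Suc ci by simp
  hence "\<And>a. a \<in> Gam i \<Longrightarrow> cen (zeta_series B (c - Suc i)) a" using zeta by blast
  thus ?case using Gam_min zeta by blast
qed

lemma Gam_end: assumes "centrally_nilpotent B" shows "\<exists>c. Gam c = {\<zero>}"
proof -
  obtain c where c: "zeta_series B c = carrier B" using assms unfolding centrally_nilpotent_def by blast
  have "Gam c \<subseteq> {\<zero>}" using Gam_zeta[OF c, of c] by simp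
  moreover have "\<zero> \<in> Gam c" using idealD(4)[OF Gam_bid] .
  ultimately show ?thesis by blast
qed

end

context br begin

lemma HL:
  assumes G: "group G" and D: "subgroup D G" and YD: "Y \<subseteq> D" and KD: "Kk \<subseteq> D"
    and Hs: "subgroup H (add_monoid B)"
    and phc: "\<And>x. x \<in> D \<Longrightarrow> \<phi> x \<in> carrier B"
    and hom: "\<And>x y. x \<in> D \<Longrightarrow> y \<in> D \<Longrightarrow> \<phi> (x \<otimes>\<^bsub>G\<^esub> y) \<oplus> \<ominus> (\<phi> x \<oplus> \<phi> y) \<in> H"
    and kill: "\<And>k. k \<in> Kk \<Longrightarrow> \<phi> k \<in> H"
  shows "g \<in> generate G (Y \<union> Kk) \<Longrightarrow> \<phi> g \<in> generate (add_monoid B) (\<phi> ` Y \<union> H)"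
proof -
  interpret G: group G by (rule G)
  have Dc: "D \<subseteq> carrier G" using subgroup.subset[OF D] .
  have gD: "generate G (Y \<union> Kk) \<subseteq> D" using G.generate_subgroup_incl[OF _ D] YD KD by blast
  have Hc: "H \<subseteq> carrier B" using asg_sub[OF Hs] .
  define T where "T = generate (add_monoid B) (\<phi> ` Y \<union> H)"
  have Tc: "\<phi> ` Y \<union> H \<subseteq> carrier B" using phc YD Hc by blast
  have T: "subgroup T (add_monoid B)" unfolding T_def using A.generate_is_subgroup[OF Tc] .
  have HT: "H \<subseteq> T" unfolding T_def using generate.incl[of _ "\<phi> ` Y \<union> H" "add_monoid B"] by blast
  have YT: "\<phi> ` Y \<subseteq> T" unfolding T_def using generate.incl[of _ "\<phi> ` Y \<union> H" "add_monoid B"] by blast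
  have phi_one: "\<phi> \<one>\<^bsub>G\<^esub> \<in> H"
  proof -
    have o: "\<one>\<^bsub>G\<^esub> \<in> D" using subgroup.one_closed[OF D] .
    have "\<phi> \<one>\<^bsub>G\<^esub> \<oplus> \<ominus> (\<phi> \<one>\<^bsub>G\<^esub> \<oplus> \<phi> \<one>\<^bsub>G\<^esub>) \<in> H" using hom[OF o o] by simp
    hence "\<ominus> \<phi> \<one>\<^bsub>G\<^esub> \<in> H" using phc[OF o] by (simp add: gs)
    thus ?thesis using asg_neg[OF Hs] phc[OF o] by fastforce
  qed
  have gen: "\<And>h. h \<in> Y \<union> Kk \<Longrightarrow> \<phi> h \<in> T" using YT HT kill by blast
  show "g \<in> generate G (Y \<union> Kk) \<Longrightarrow> \<phi> g \<in> generate (add_monoid B) (\<phi> ` Y \<union> H)"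
    unfolding T_def[symmetric]
  proof (induction rule: generate.induct)
    case one thus ?case using phi_one HT by blast
  next
    case (incl h) thus ?case using gen by blast
  next
    case (inv h)
    have hD: "h \<in> D" using inv YD KD by blast
    have ihD: "inv\<^bsub>G\<^esub> h \<in> D" using subgroup.m_inv_closed[OF D hD] .
    have t: "\<phi> \<one>\<^bsub>G\<^esub> \<oplus> \<ominus> (\<phi> h \<oplus> \<phi> (inv\<^bsub>G\<^esub> h)) \<in> H" using hom[OF hD ihD] hD Dc by (simp add: subsetD)
    have c: "\<phi> h \<in> carrier B" "\<phi> (inv\<^bsub>G\<^esub> h) \<in> carrier B" "\<phi> \<one>\<^bsub>G\<^esub> \<in> carrier B"
      using phc hD ihD subgroup.one_closed[OF D] by auto
    have "\<ominus> (\<phi> \<one>\<^bsub>G\<^esub> \<oplus> \<ominus> (\<phi> h \<oplus> \<phi> (inv\<^bsub>G\<^esub> h))) \<oplus> \<phi> \<one>\<^bsub>G\<^esub> \<in> T"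
      using asg_add[OF T] asg_neg[OF Hs t] HT phi_one by blast
    hence "\<phi> h \<oplus> \<phi> (inv\<^bsub>G\<^esub> h) \<in> T" using c by (simp add: gs)
    hence "\<ominus> \<phi> h \<oplus> (\<phi> h \<oplus> \<phi> (inv\<^bsub>G\<^esub> h)) \<in> T" using asg_add[OF T asg_neg[OF T gen[OF inv]]] by blast
    thus ?case using c by simp
  next
    case (eng h1 h2)
    have hD: "h1 \<in> D" "h2 \<in> D" using eng gD by auto
    have c: "\<phi> h1 \<in> carrier B" "\<phi> h2 \<in> carrier B" "\<phi> (h1 \<otimes>\<^bsub>G\<^esub> h2) \<in> carrier B"
      using phc hD subgroup.m_closed[OF D hD] by auto
    have "(\<phi> (h1 \<otimes>\<^bsub>G\<^esub> h2) \<oplus> \<ominus> (\<phi> h1 \<oplus> \<phi> h2)) \<oplus> (\<phi> h1 \<oplus> \<phi> h2) \<in> T"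
      using asg_add[OF T] HT hom[OF hD] eng by blast
    thus ?case using c by (simp add: gs)
  qed
qed


lemma cK_in: "bid K \<Longrightarrow> cen K a \<Longrightarrow> b \<in> carrier B \<Longrightarrow> f1 a b \<in> K \<and> f2 a b \<in> K \<and> f3 a b \<in> K"
  unfolding cen_f by blast

lemma kill_f: assumes H: "bid H" and z: "cen H z" and a: "a \<in> carrier B"
  shows "f1 z a \<in> H" "f1 a z \<in> H" "f2 z a \<in> H" "f2 a z \<in> H" "f3 z a \<in> H" "f3 a z \<in> H"
proof -
  have zc: "z \<in> carrier B" using cen_carr[OF z] .
  show "f1 z a \<in> H" "f2 z a \<in> H" "f3 z a \<in> H" using z a unfolding cen_f by auto
  show "f1 a z \<in> H" using cenD(4)[OF z a] unfolding md_def f1_def by simp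
  show "f3 a z \<in> H" using cenD(2)[OF z a] unfolding md_def f3_def by simp
  have "md H (z \<oplus> a) (a \<oplus> z)" using cenD(3)[OF z a] .
  hence "md H (a \<oplus> z) (z \<oplus> a)" using md_sym[OF H] by blast
  thus "f2 a z \<in> H" unfolding md_def f2_def by simp
qed

lemma comm_c: "bid H \<Longrightarrow> cen H c \<Longrightarrow> x \<in> carrier B \<Longrightarrow> md H (x \<oplus> c) (c \<oplus> x)"
  using cenD(3) md_sym by blast

lemma hom1b: assumes H: "bid H" and K: "bid K" and cK: "\<And>z. z \<in> K \<Longrightarrow> cen H z"
  and a: "cen K a" and b: "b \<in> carrier B" and b': "b' \<in> carrier B"
  shows "md H (f1 a (b \<oplus> b')) (f1 a b \<oplus> f1 a b')"
proof -
  note tr[trans] = md_trans[OF H]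
  have ac: "a \<in> carrier B" using cen_carr[OF a] .
  define d' where "d' = f1 a b'"
  have d'K: "cen H d'" using cK cK_in[OF K a b'] unfolding d'_def by blast
  have d'c: "d' \<in> carrier B" using cen_carr[OF d'K] .
  have "f1 a (b \<oplus> b') = lam a b \<oplus> (d' \<oplus> \<ominus> b)" using ac b b' by (simp add: f1_def d'_def lam_add gs)
  also have "md H \<dots> (lam a b \<oplus> (\<ominus> b \<oplus> d'))"
    using md_add[OF H md_refl[OF H] cenD(3)[OF d'K A.inv_closed[OF b]]] ac b by simp
  also have "lam a b \<oplus> (\<ominus> b \<oplus> d') = f1 a b \<oplus> f1 a b'" using ac b d'c by (simp add: f1_def d'_def gs)
  finally show ?thesis .
qed

lemma hom3a: assumes H: "bid H" and K: "bid K" and cK: "\<And>z. z \<in> K \<Longrightarrow> cen H z"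
  and a: "cen K a" and a': "cen K a'" and b: "b \<in> carrier B"
  shows "md H (f3 (a \<oplus> a') b) (f3 a b \<oplus> f3 a' b)"
proof -
  note tr[trans] = md_trans[OF H]
  have ac: "a \<in> carrier B" "a' \<in> carrier B" using cen_carr[OF a] cen_carr[OF a'] .
  define e' where "e' = f3 a' b"
  have e'K: "cen H e'" using cK cK_in[OF K a' b] unfolding e'_def by blast
  have e'c: "e' \<in> carrier B" using cen_carr[OF e'K] .
  have "f3 (a \<oplus> a') b = lam b a \<oplus> (e' \<oplus> \<ominus> a)" using ac b by (simp add: f3_def e'_def lam_add gs)
  also have "md H \<dots> (lam b a \<oplus> (\<ominus> a \<oplus> e'))"
    using md_add[OF H md_refl[OF H] cenD(3)[OF e'K A.inv_closed[OF ac(1)]]] ac b by simp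
  also have "lam b a \<oplus> (\<ominus> a \<oplus> e') = f3 a b \<oplus> f3 a' b" using ac b e'c by (simp add: f3_def e'_def gs)
  finally show ?thesis .
qed

lemma hom3b: assumes H: "bid H" and K: "bid K" and cK: "\<And>z. z \<in> K \<Longrightarrow> cen H z"
  and a: "cen K a" and b: "b \<in> carrier B" and b': "b' \<in> carrier B"
  shows "md H (f3 a (b \<otimes> b')) (f3 a b \<oplus> f3 a b')"
proof -
  note tr[trans] = md_trans[OF H]
  have ac: "a \<in> carrier B" using cen_carr[OF a] .
  define e' where "e' = f3 a b'"
  have e'K: "cen H e'" using cK cK_in[OF K a b'] unfolding e'_def by blast
  have e'c: "e' \<in> carrier B" using cen_carr[OF e'K] .
  have l: "lam b' a = e' \<oplus> a" using ac b' by (simp add: e'_def f3_def gs)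
  have "f3 a (b \<otimes> b') = lam b e' \<oplus> (lam b a \<oplus> \<ominus> a)" using ac b b' e'c by (simp add: f3_def lam_mult l lam_add gs)
  also have "md H \<dots> (e' \<oplus> (lam b a \<oplus> \<ominus> a))"
    using md_add[OF H cenD(4)[OF e'K b] md_refl[OF H]] ac b by simp
  also have "md H \<dots> ((lam b a \<oplus> \<ominus> a) \<oplus> e')"
    using cenD(3)[OF e'K, of "lam b a \<oplus> \<ominus> a"] ac b by simp
  also have "(lam b a \<oplus> \<ominus> a) \<oplus> e' = f3 a b \<oplus> f3 a b'" by (simp add: f3_def e'_def)
  finally show ?thesis .
qed


lemma hom2b: assumes H: "bid H" and K: "bid K" and cK: "\<And>z. z \<in> K \<Longrightarrow> cen H z"
  and a: "cen K a" and b: "b \<in> carrier B" and b': "b' \<in> carrier B"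
  shows "md H (f2 a (b \<oplus> b')) (f2 a b \<oplus> f2 a b')"
proof -
  note tr[trans] = md_trans[OF H]
  have ac: "a \<in> carrier B" using cen_carr[OF a] .
  define c where "c = f2 a b"
  define c' where "c' = f2 a b'"
  have c'K: "cen H c'" using cK cK_in[OF K a b'] unfolding c'_def by blast
  have cc: "c \<in> carrier B" "c' \<in> carrier B" using ac b b' by (auto simp: c_def c'_def)
  have "f2 a (b \<oplus> b') = c \<oplus> (b \<oplus> c') \<oplus> (b' \<oplus> a) \<oplus> \<ominus> (b \<oplus> b' \<oplus> a)"
    using ac b b' by (simp add: f2_def c_def c'_def gs)
  also have "md H \<dots> (c \<oplus> (c' \<oplus> b) \<oplus> (b' \<oplus> a) \<oplus> \<ominus> (b \<oplus> b' \<oplus> a))"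
    by (intro md_add[OF H] md_refl[OF H] comm_c[OF H c'K b]) (use ac b b' cc in auto)
  also have "c \<oplus> (c' \<oplus> b) \<oplus> (b' \<oplus> a) \<oplus> \<ominus> (b \<oplus> b' \<oplus> a) = f2 a b \<oplus> f2 a b'"
    using ac b b' by (simp add: f2_def c_def c'_def gs)
  finally show ?thesis .
qed

lemma hom2a: assumes H: "bid H" and K: "bid K" and cK: "\<And>z. z \<in> K \<Longrightarrow> cen H z"
  and a: "cen K a" and a': "cen K a'" and b: "b \<in> carrier B"
  shows "md H (f2 (a \<oplus> a') b) (f2 a b \<oplus> f2 a' b)"
proof -
  note tr[trans] = md_trans[OF H]
  have ac: "a \<in> carrier B" "a' \<in> carrier B" using cen_carr[OF a] cen_carr[OF a'] .
  define c where "c = f2 a b"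
  define c' where "c' = f2 a' b"
  have c'K: "cen H c'" using cK cK_in[OF K a' b] unfolding c'_def by blast
  have cc: "c \<in> carrier B" "c' \<in> carrier B" using ac b by (auto simp: c_def c'_def)
  have "f2 (a \<oplus> a') b = (a \<oplus> c') \<oplus> (b \<oplus> a') \<oplus> \<ominus> (b \<oplus> (a \<oplus> a'))"
    using ac b by (simp add: f2_def c'_def gs)
  also have "md H \<dots> ((c' \<oplus> a) \<oplus> (b \<oplus> a') \<oplus> \<ominus> (b \<oplus> (a \<oplus> a')))"
    by (intro md_add[OF H] md_refl[OF H] comm_c[OF H c'K ac(1)]) (use ac b cc in auto)
  also have "(c' \<oplus> a) \<oplus> (b \<oplus> a') \<oplus> \<ominus> (b \<oplus> (a \<oplus> a')) = c' \<oplus> c"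
    using ac b cc by (simp add: f2_def c_def gs)
  also have "md H (c' \<oplus> c) (c \<oplus> c')" using cenD(3)[OF c'K cc(1)] .
  finally show ?thesis by (simp add: c_def c'_def)
qed

lemma hom1a: assumes H: "bid H" and K: "bid K" and cK: "\<And>z. z \<in> K \<Longrightarrow> cen H z"
  and a: "cen K a" and a': "cen K a'" and b: "b \<in> carrier B"
  shows "md H (f1 (a \<oplus> a') b) (f1 a b \<oplus> f1 a' b)"
proof -
  note tr[trans] = md_trans[OF H]
  have ac: "a \<in> carrier B" "a' \<in> carrier B" using cen_carr[OF a] cen_carr[OF a'] .
  define a'' where "a'' = lam (inv a) a'"
  define e where "e = f3 a' (inv a)"
  define d' where "d' = f1 a' b"
  have eK: "cen H e" using cK cK_in[OF K a' M.inv_closed[OF ac(1)]] unfolding e_def by blast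
  have d'K: "cen H d'" using cK cK_in[OF K a' b] unfolding d'_def by blast
  have cc: "a'' \<in> carrier B" "e \<in> carrier B" "d' \<in> carrier B" using ac b
    by (auto simp: a''_def e_def d'_def)
  have "a'' = e \<oplus> a'" using ac by (simp add: a''_def e_def f3_def gs)
  also have "md H \<dots> (e \<oplus> lam e a')"
    using md_add[OF H md_refl[OF H cc(2)] md_sym[OF H cenD(2)[OF eK ac(2)]]] .
  also have "e \<oplus> lam e a' = e \<otimes> a'" using cc ac by (simp add: mult_lam)
  finally have 1: "md H a'' (e \<otimes> a')" .
  have "lam a'' b = lam a'' b" ..
  have "md H (lam a'' b) (lam (e \<otimes> a') b)" using md_lamL[OF H b 1] .
  also have "lam (e \<otimes> a') b = lam e (lam a' b)" using cc ac b by (simp add: lam_mult)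
  also have "md H \<dots> (lam a' b)" using cenD(2)[OF eK] ac b by simp
  also have "lam a' b = d' \<oplus> b" using ac b by (simp add: d'_def f1_def gs)
  finally have 2: "md H (lam a'' b) (d' \<oplus> b)" .
  have "f1 (a \<oplus> a') b = lam a (lam a'' b) \<oplus> \<ominus> b"
    using ac b cc by (simp add: f1_def add_mult[OF ac] a''_def lam_mult)
  also have "md H \<dots> (lam a (d' \<oplus> b) \<oplus> \<ominus> b)"
    using md_add[OF H md_lamR[OF H ac(1) 2] md_refl[OF H A.inv_closed[OF b]]] .
  also have "lam a (d' \<oplus> b) \<oplus> \<ominus> b = lam a d' \<oplus> lam a b \<oplus> \<ominus> b" using ac b cc by (simp add: lam_add)
  also have "md H \<dots> (d' \<oplus> lam a b \<oplus> \<ominus> b)"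
    by (intro md_add[OF H] md_refl[OF H] cenD(4)[OF d'K ac(1)]) (use ac b cc in auto)
  also have "d' \<oplus> lam a b \<oplus> \<ominus> b = d' \<oplus> f1 a b" using ac b cc by (simp add: f1_def gs)
  also have "md H \<dots> (f1 a b \<oplus> d')" using cenD(3)[OF d'K] ac b by simp
  finally show ?thesis by (simp add: d'_def)
qed

end

context br begin

abbreviation "gA S0 \<equiv> generate (add_monoid B) S0"
abbreviation "gM S0 \<equiv> generate B S0"

lemma gA_sub: "S0 \<subseteq> carrier B \<Longrightarrow> subgroup (gA S0) (add_monoid B)"
  by (rule A.generate_is_subgroup)
lemma gM_sub: "S0 \<subseteq> carrier B \<Longrightarrow> subgroup (gM S0) B"
  by (rule M.generate_is_subgroup)
lemma gA_incl: "S0 \<subseteq> gA S0"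
  by (auto intro: generate.incl)
lemma gM_incl: "S0 \<subseteq> gM S0"
  by (auto intro: generate.incl)
lemma gA_min: "subgroup T (add_monoid B) \<Longrightarrow> S0 \<subseteq> T \<Longrightarrow> gA S0 \<subseteq> T"
  by (rule A.generate_subgroup_incl)
lemma gM_min: "subgroup T B \<Longrightarrow> S0 \<subseteq> T \<Longrightarrow> gM S0 \<subseteq> T"
  by (rule M.generate_subgroup_incl)

lemma Gam_cen2: "a \<in> Gam n \<Longrightarrow> cen (Gam (Suc n)) a" using Gam_cen .
lemma Gam_sA: "subgroup (Gam n) (add_monoid B)" using idealD(1)[OF Gam_bid] .
lemma Gam_sM: "subgroup (Gam n) B" using idealD(2)[OF Gam_bid] .

lemma G0: assumes fg: "finitely_generated_brace B"
  shows "\<exists>F. finite F \<and> F \<subseteq> Gam 0 \<and> Gam 0 \<subseteq> gA (F \<union> Gam (Suc 0))"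
proof -
  obtain S where S: "finite S" "S \<subseteq> carrier B" "generated_subbrace B S = carrier B"
    using fg unfolding finitely_generated_brace_def by blast
  define T where "T = gA (S \<union> Gam 1)"
  have Tc: "S \<union> Gam 1 \<subseteq> carrier B" using S Gam_carr by blast
  have T: "subgroup T (add_monoid B)" unfolding T_def using gA_sub[OF Tc] .
  have GT: "Gam 1 \<subseteq> T" unfolding T_def using gA_incl by blast
  have cT: "\<And>t. t \<in> T \<Longrightarrow> cen (Gam 1) t"
    using Gam_cen[of _ 0] asg_sub[OF T] by auto
  have "bid T" using CL[OF Gam_bid T GT cT] .
  hence "subbrace B T" unfolding bid_def brace_ideal_def by simp
  moreover have "S \<subseteq> T" unfolding T_def using gA_incl by blast
  ultimately have "generated_subbrace B S \<subseteq> T" unfolding generated_subbrace_def by blast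
  thus ?thesis using S unfolding T_def by (intro exI[of _ S]) auto
qed

lemma Qstep:
  assumes Y: "finite Y" "Y \<subseteq> carrier B" "carrier B \<subseteq> gA (Y \<union> Gam n)" "carrier B \<subseteq> gM (Y \<union> Gam n)"
    and F: "finite F" "F \<subseteq> Gam n" "Gam n \<subseteq> gA (F \<union> Gam (Suc n))"
  shows "finite (Y \<union> F) \<and> Y \<union> F \<subseteq> carrier B \<and> carrier B \<subseteq> gA (Y \<union> F \<union> Gam (Suc n))
     \<and> carrier B \<subseteq> gM (Y \<union> F \<union> Gam (Suc n))"
proof -
  have FG: "F \<union> Gam (Suc n) \<subseteq> Gam n" using F Gam_dec by blast
  have c1: "Y \<union> F \<union> Gam (Suc n) \<subseteq> carrier B" using Y F Gam_carr by blast
  have "gA (F \<union> Gam (Suc n)) \<subseteq> gA (Y \<union> F \<union> Gam (Suc n))" by (rule A.mono_generate) blast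
  hence "Y \<union> Gam n \<subseteq> gA (Y \<union> F \<union> Gam (Suc n))" using F(3) gA_incl[of "Y \<union> F \<union> Gam (Suc n)"] by blast
  hence a: "carrier B \<subseteq> gA (Y \<union> F \<union> Gam (Suc n))" using gA_min[OF gA_sub[OF c1]] Y(3) by blast
  define T' where "T' = gM (F \<union> Gam (Suc n))"
  have c2: "F \<union> Gam (Suc n) \<subseteq> carrier B" using FG Gam_carr by blast
  have T': "subgroup T' B" unfolding T'_def using gM_sub[OF c2] .
  have GT: "Gam (Suc n) \<subseteq> T'" unfolding T'_def using gM_incl by blast
  have TG: "T' \<subseteq> Gam n" unfolding T'_def using gM_min[OF Gam_sM FG] .
  have cT: "\<And>t. t \<in> T' \<Longrightarrow> cen (Gam (Suc n)) t" using Gam_cen TG by blast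
  have "subgroup T' (add_monoid B)" using CL'[OF Gam_bid T' GT cT] .
  moreover have "F \<union> Gam (Suc n) \<subseteq> T'" unfolding T'_def using gM_incl by blast
  ultimately have "gA (F \<union> Gam (Suc n)) \<subseteq> T'" using gA_min by blast
  hence GnT: "Gam n \<subseteq> T'" using F(3) by blast
  have "T' \<subseteq> gM (Y \<union> F \<union> Gam (Suc n))" unfolding T'_def by (rule M.mono_generate) blast
  hence "Y \<union> Gam n \<subseteq> gM (Y \<union> F \<union> Gam (Suc n))" using GnT gM_incl[of "Y \<union> F \<union> Gam (Suc n)"] by blast
  hence m: "carrier B \<subseteq> gM (Y \<union> F \<union> Gam (Suc n))" using gM_min[OF gM_sub[OF c1]] Y(4) by blast
  show ?thesis using a m Y F c1 by blast
qed


end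

context br begin
lemma comb:
  assumes fA: "\<And>a a' b. cen K a \<Longrightarrow> cen K a' \<Longrightarrow> b \<in> carrier B \<Longrightarrow> md H (f (a \<oplus> a') b) (f a b \<oplus> f a' b)"
    and fB: "\<And>a b b'. cen K a \<Longrightarrow> b \<in> carrier B \<Longrightarrow> b' \<in> carrier B \<Longrightarrow> md H (f a (b \<otimes>\<^bsub>Gb\<^esub> b')) (f a b \<oplus> f a b')"
    and fk1: "\<And>z b. z \<in> K \<Longrightarrow> b \<in> carrier B \<Longrightarrow> f z b \<in> H"
    and fk2: "\<And>a z. a \<in> carrier B \<Longrightarrow> z \<in> K \<Longrightarrow> f a z \<in> H"
    and fc: "\<And>a b. a \<in> carrier B \<Longrightarrow> b \<in> carrier B \<Longrightarrow> f a b \<in> carrier B"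
    and Gb: "group Gb" "carrier Gb = carrier B" and Bgen: "carrier B \<subseteq> generate Gb (Y \<union> K)"
    and Yc: "Y \<subseteq> carrier B"
    and As: "subgroup As (add_monoid B)" and cA: "\<And>a. a \<in> As \<Longrightarrow> cen K a"
    and FA: "F \<subseteq> As" and KA: "K \<subseteq> As" and Agen: "As \<subseteq> gA (F \<union> K)"
    and H: "bid H" and T: "subgroup T (add_monoid B)" and HT: "H \<subseteq> T"
    and FY: "\<And>x y. x \<in> F \<Longrightarrow> y \<in> Y \<Longrightarrow> f x y \<in> T"
  shows "a \<in> As \<Longrightarrow> b \<in> carrier B \<Longrightarrow> f a b \<in> T"
proof -
  have Hs: "subgroup H (add_monoid B)" using idealD(1)[OF H] .
  have Hc: "H \<subseteq> carrier B" using idealD(3)[OF H] .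
  have Ac: "As \<subseteq> carrier B" using asg_sub[OF As] .
  have Kc: "K \<subseteq> carrier B" using KA Ac by blast
  have stepB: "\<And>x b. x \<in> F \<Longrightarrow> b \<in> carrier B \<Longrightarrow> f x b \<in> T"
  proof -
    fix x b assume x: "x \<in> F" and b: "b \<in> carrier B"
    have xc: "x \<in> carrier B" "cen K x" using x FA Ac cA by auto
    interpret Gb: group Gb by (rule Gb(1))
    have D: "subgroup (carrier B) Gb" using Gb.subgroup_self Gb(2) by simp
    have "f x b \<in> gA (f x ` Y \<union> H)"
    proof (rule HL[OF Gb(1) D Yc Kc Hs])
      show "\<And>y. y \<in> carrier B \<Longrightarrow> f x y \<in> carrier B" using fc xc(1) by simp
      show "\<And>y y'. y \<in> carrier B \<Longrightarrow> y' \<in> carrier B \<Longrightarrow> f x (y \<otimes>\<^bsub>Gb\<^esub> y') \<oplus> \<ominus> (f x y \<oplus> f x y') \<in> H"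
        using fB[OF xc(2)] unfolding md_def by simp
      show "\<And>k. k \<in> K \<Longrightarrow> f x k \<in> H" using fk2 xc by blast
      show "b \<in> generate Gb (Y \<union> K)" using Bgen b by blast
    qed
    moreover have "gA (f x ` Y \<union> H) \<subseteq> T"
    proof (rule gA_min[OF T])
      show "f x ` Y \<union> H \<subseteq> T" using FY[OF x] HT by blast
    qed
    ultimately show "f x b \<in> T" by blast
  qed
  assume a: "a \<in> As" and b: "b \<in> carrier B"
  have "f a b \<in> gA ((\<lambda>a. f a b) ` F \<union> H)"
  proof (rule HL[OF A.is_group As FA KA Hs, of "\<lambda>a. f a b"])
    show "\<And>x. x \<in> As \<Longrightarrow> f x b \<in> carrier B" using fc b Ac by (simp add: subsetD)
    show "\<And>x y. x \<in> As \<Longrightarrow> y \<in> As \<Longrightarrow> f (x \<otimes>\<^bsub>add_monoid B\<^esub> y) b \<oplus> \<ominus> (f x b \<oplus> f y b) \<in> H"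
    proof -
      fix x y assume "x \<in> As" "y \<in> As"
      hence "md H (f (x \<oplus> y) b) (f x b \<oplus> f y b)" using fA cA b by blast
      thus "f (x \<otimes>\<^bsub>add_monoid B\<^esub> y) b \<oplus> \<ominus> (f x b \<oplus> f y b) \<in> H" unfolding md_def by simp
    qed
    show "\<And>k. k \<in> K \<Longrightarrow> f k b \<in> H" using fk1 b by blast
    show "a \<in> gA (F \<union> K)" using Agen a by blast
  qed
  moreover have "gA ((\<lambda>a. f a b) ` F \<union> H) \<subseteq> T"
  proof (rule gA_min[OF T])
    show "(\<lambda>a. f a b) ` F \<union> H \<subseteq> T" using stepB[OF _ b] HT by blast
  qed
  ultimately show "f a b \<in> T" by blast
qed


lemma Gstep:
  assumes Y: "finite Y" "Y \<subseteq> carrier B" "carrier B \<subseteq> gA (Y \<union> Gam (Suc n))" "carrier B \<subseteq> gM (Y \<union> Gam (Suc n))"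
    and F: "finite F" "F \<subseteq> Gam n" "Gam n \<subseteq> gA (F \<union> Gam (Suc n))"
  shows "\<exists>F'. finite F' \<and> F' \<subseteq> Gam (Suc n) \<and> Gam (Suc n) \<subseteq> gA (F' \<union> Gam (Suc (Suc n)))"
proof -
  let ?K = "Gam (Suc n)" and ?H = "Gam (Suc (Suc n))"
  have K: "bid ?K" using Gam_bid[of "Suc n"] .
  have H: "bid ?H" using Gam_bid[of "Suc (Suc n)"] .
  have cK: "\<And>z. z \<in> ?K \<Longrightarrow> cen ?H z" using Gam_cen by blast
  have cA: "\<And>a. a \<in> Gam n \<Longrightarrow> cen ?K a" using Gam_cen by blast
  define F' where "F' = (\<lambda>p. f1 (fst p) (snd p)) ` (F \<times> Y) \<union> (\<lambda>p. f2 (fst p) (snd p)) ` (F \<times> Y)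
     \<union> (\<lambda>p. f3 (fst p) (snd p)) ` (F \<times> Y)"
  have fin: "finite F'" unfolding F'_def using F(1) Y(1) by simp
  have F'K: "F' \<subseteq> ?K"
  proof -
    have "\<And>x y. x \<in> F \<Longrightarrow> y \<in> Y \<Longrightarrow> f1 x y \<in> ?K \<and> f2 x y \<in> ?K \<and> f3 x y \<in> ?K"
      using cK_in[OF K cA] F(2) Y(2) by blast
    thus ?thesis unfolding F'_def by auto
  qed
  define T where "T = gA (F' \<union> ?H)"
  have c: "F' \<union> ?H \<subseteq> carrier B" using F'K Gam_carr by blast
  have T: "subgroup T (add_monoid B)" unfolding T_def using gA_sub[OF c] .
  have HT: "?H \<subseteq> T" unfolding T_def using gA_incl by blast
  have F'T: "F' \<subseteq> T" unfolding T_def using gA_incl by blast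
  have TK: "T \<subseteq> ?K" unfolding T_def using gA_min[OF Gam_sA] F'K Gam_dec by blast
  have bT: "bid T" using CL[OF H T HT] cK TK by blast
  have As: "subgroup (Gam n) (add_monoid B)" using Gam_sA .
  have KA: "?K \<subseteq> Gam n" using Gam_dec .
  have Bgen: "carrier B \<subseteq> generate (add_monoid B) (Y \<union> ?K)" using Y(3) .
  have Bgen': "carrier B \<subseteq> generate B (Y \<union> ?K)" using Y(4) .
  have x1: "\<And>a b. a \<in> Gam n \<Longrightarrow> b \<in> carrier B \<Longrightarrow> f1 a b \<in> T"
  proof (rule comb[where f=f1, OF _ _ _ _ _ A.is_group _ Bgen Y(2) As cA F(2) KA F(3) H T HT])
    show "\<And>a a' b. cen ?K a \<Longrightarrow> cen ?K a' \<Longrightarrow> b \<in> carrier B \<Longrightarrow> md ?H (f1 (a \<oplus> a') b) (f1 a b \<oplus> f1 a' b)"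
      using hom1a[OF H K cK] by blast
    show "\<And>a b b'. cen ?K a \<Longrightarrow> b \<in> carrier B \<Longrightarrow> b' \<in> carrier B \<Longrightarrow> md ?H (f1 a (b \<otimes>\<^bsub>add_monoid B\<^esub> b')) (f1 a b \<oplus> f1 a b')"
      using hom1b[OF H K cK] by simp
    show "\<And>z b. z \<in> ?K \<Longrightarrow> b \<in> carrier B \<Longrightarrow> f1 z b \<in> ?H" using kill_f(1)[OF H cK] by blast
    show "\<And>a z. a \<in> carrier B \<Longrightarrow> z \<in> ?K \<Longrightarrow> f1 a z \<in> ?H" using kill_f(2)[OF H cK] by blast
    show "\<And>a b. a \<in> carrier B \<Longrightarrow> b \<in> carrier B \<Longrightarrow> f1 a b \<in> carrier B" by simp
    show "\<And>x y. x \<in> F \<Longrightarrow> y \<in> Y \<Longrightarrow> f1 x y \<in> T" using F'T unfolding F'_def by force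
  qed simp_all
  have x2: "\<And>a b. a \<in> Gam n \<Longrightarrow> b \<in> carrier B \<Longrightarrow> f2 a b \<in> T"
  proof (rule comb[where f=f2, OF _ _ _ _ _ A.is_group _ Bgen Y(2) As cA F(2) KA F(3) H T HT])
    show "\<And>a a' b. cen ?K a \<Longrightarrow> cen ?K a' \<Longrightarrow> b \<in> carrier B \<Longrightarrow> md ?H (f2 (a \<oplus> a') b) (f2 a b \<oplus> f2 a' b)"
      using hom2a[OF H K cK] by blast
    show "\<And>a b b'. cen ?K a \<Longrightarrow> b \<in> carrier B \<Longrightarrow> b' \<in> carrier B \<Longrightarrow> md ?H (f2 a (b \<otimes>\<^bsub>add_monoid B\<^esub> b')) (f2 a b \<oplus> f2 a b')"
      using hom2b[OF H K cK] by simp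
    show "\<And>z b. z \<in> ?K \<Longrightarrow> b \<in> carrier B \<Longrightarrow> f2 z b \<in> ?H" using kill_f(3)[OF H cK] by blast
    show "\<And>a z. a \<in> carrier B \<Longrightarrow> z \<in> ?K \<Longrightarrow> f2 a z \<in> ?H" using kill_f(4)[OF H cK] by blast
    show "\<And>a b. a \<in> carrier B \<Longrightarrow> b \<in> carrier B \<Longrightarrow> f2 a b \<in> carrier B" by simp
    show "\<And>x y. x \<in> F \<Longrightarrow> y \<in> Y \<Longrightarrow> f2 x y \<in> T" using F'T unfolding F'_def by force
  qed simp_all
  have x3: "\<And>a b. a \<in> Gam n \<Longrightarrow> b \<in> carrier B \<Longrightarrow> f3 a b \<in> T"
  proof (rule comb[where f=f3, OF _ _ _ _ _ M.is_group _ Bgen' Y(2) As cA F(2) KA F(3) H T HT])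
    show "\<And>a a' b. cen ?K a \<Longrightarrow> cen ?K a' \<Longrightarrow> b \<in> carrier B \<Longrightarrow> md ?H (f3 (a \<oplus> a') b) (f3 a b \<oplus> f3 a' b)"
      using hom3a[OF H K cK] by blast
    show "\<And>a b b'. cen ?K a \<Longrightarrow> b \<in> carrier B \<Longrightarrow> b' \<in> carrier B \<Longrightarrow> md ?H (f3 a (b \<otimes> b')) (f3 a b \<oplus> f3 a b')"
      using hom3b[OF H K cK] by blast
    show "\<And>z b. z \<in> ?K \<Longrightarrow> b \<in> carrier B \<Longrightarrow> f3 z b \<in> ?H" using kill_f(5)[OF H cK] by blast
    show "\<And>a z. a \<in> carrier B \<Longrightarrow> z \<in> ?K \<Longrightarrow> f3 a z \<in> ?H" using kill_f(6)[OF H cK] by blast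
    show "\<And>a b. a \<in> carrier B \<Longrightarrow> b \<in> carrier B \<Longrightarrow> f3 a b \<in> carrier B" by simp
    show "\<And>x y. x \<in> F \<Longrightarrow> y \<in> Y \<Longrightarrow> f3 x y \<in> T" using F'T unfolding F'_def by force
  qed simp_all
  have "Xs (Gam n) \<subseteq> T" unfolding Xs_def using x1 x2 x3 by blast
  hence "?K \<subseteq> T" using idealgen(3)[OF Xs_carr[OF Gam_carr] bT] by simp
  thus ?thesis using fin F'K unfolding T_def by blast
qed

lemma GQ: assumes fg: "finitely_generated_brace B"
  shows "(\<exists>Y. finite Y \<and> Y \<subseteq> carrier B \<and> carrier B \<subseteq> gA (Y \<union> Gam n) \<and> carrier B \<subseteq> gM (Y \<union> Gam n))
    \<and> (\<exists>F. finite F \<and> F \<subseteq> Gam n \<and> Gam n \<subseteq> gA (F \<union> Gam (Suc n)))"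
proof (induction n)
  case 0
  have "carrier B \<subseteq> gA ({} \<union> Gam 0)" using gA_incl[of "{} \<union> Gam 0"] by simp
  moreover have "carrier B \<subseteq> gM ({} \<union> Gam 0)" using gM_incl[of "{} \<union> Gam 0"] by simp
  ultimately have "\<exists>Y. finite Y \<and> Y \<subseteq> carrier B \<and> carrier B \<subseteq> gA (Y \<union> Gam 0) \<and> carrier B \<subseteq> gM (Y \<union> Gam 0)"
    by (intro exI[of _ "{}"]) simp
  thus ?case using G0[OF fg] by (intro conjI)
next
  case (Suc n)
  then obtain Y F where Y: "finite Y" "Y \<subseteq> carrier B" "carrier B \<subseteq> gA (Y \<union> Gam n)" "carrier B \<subseteq> gM (Y \<union> Gam n)"
    and F: "finite F" "F \<subseteq> Gam n" "Gam n \<subseteq> gA (F \<union> Gam (Suc n))" by blast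
  have Y': "finite (Y \<union> F) \<and> Y \<union> F \<subseteq> carrier B \<and> carrier B \<subseteq> gA (Y \<union> F \<union> Gam (Suc n))
     \<and> carrier B \<subseteq> gM (Y \<union> F \<union> Gam (Suc n))" using Qstep[OF Y F] .
  have "\<exists>F'. finite F' \<and> F' \<subseteq> Gam (Suc n) \<and> Gam (Suc n) \<subseteq> gA (F' \<union> Gam (Suc (Suc n)))"
    using Gstep[of "Y \<union> F" n F] Y' F by simp
  moreover have "\<exists>Y. finite Y \<and> Y \<subseteq> carrier B \<and> carrier B \<subseteq> gA (Y \<union> Gam (Suc n)) \<and> carrier B \<subseteq> gM (Y \<union> Gam (Suc n))"
    using Y' by (intro exI[of _ "Y \<union> F"])
  ultimately show ?case by (intro conjI)
qed

end

context br begin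

definition "good J K \<longleftrightarrow> (let Q = brace_quot B J; S = sub_quot B K J in
             (infinite S \<and> (\<exists>g\<in>S. S = generate (add_monoid Q) {g}) \<and> S \<subseteq> socle Q)
             \<or> Factorial_Ring.prime (card S))"

definition "chain J K \<longleftrightarrow> (\<exists>n. \<exists>I :: nat \<Rightarrow> 'a set. I 0 = J \<and> I n = K \<and> (\<forall>i\<le>n. bid (I i)) \<and>
   (\<forall>i<n. I i \<subseteq> I (Suc i)) \<and> (\<forall>i<n. good (I i) (I (Suc i))))"

lemma chain_ss: "chain {\<zero>} (carrier B) \<Longrightarrow> supersoluble B"
  unfolding chain_def supersoluble_def good_def bid_def by blast

lemma chain_refl: "bid J \<Longrightarrow> chain J J"
  unfolding chain_def by (intro exI[of _ 0] exI[of _ "\<lambda>_. J"]) simp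

lemma chain_step: "bid J \<Longrightarrow> bid K \<Longrightarrow> J \<subseteq> K \<Longrightarrow> good J K \<Longrightarrow> chain J K"
  unfolding chain_def
  apply (intro exI[of _ 1] exI[of _ "\<lambda>i. if i = 0 then J else K"])
  apply (auto simp: le_Suc_eq)
  done

lemma chain_trans: assumes 1: "chain J K" and 2: "chain K L" shows "chain J L"
proof -
  obtain n I where I: "I 0 = J" "I n = K" "\<forall>i\<le>n. bid (I i)" "\<forall>i<n. I i \<subseteq> I (Suc i)"
    "\<forall>i<n. good (I i) (I (Suc i))" using 1 unfolding chain_def by blast
  obtain m I' where I': "I' 0 = K" "I' m = L" "\<forall>i\<le>m. bid (I' i)" "\<forall>i<m. I' i \<subseteq> I' (Suc i)"
    "\<forall>i<m. good (I' i) (I' (Suc i))" using 2 unfolding chain_def by blast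
  define I'' where "I'' i = (if i \<le> n then I i else I' (i - n))" for i
  have a: "\<And>i. i < n \<Longrightarrow> I'' i = I i \<and> I'' (Suc i) = I (Suc i)" unfolding I''_def by auto
  have b: "\<And>i. n \<le> i \<Longrightarrow> I'' i = I' (i - n) \<and> I'' (Suc i) = I' (Suc (i - n))"
    unfolding I''_def using I(2) I'(1) by (auto simp: Suc_diff_le)
  show ?thesis unfolding chain_def
  proof (intro exI[of _ "n + m"] exI[of _ I''] conjI allI impI ballI)
    show "I'' 0 = J" using I(1) by (simp add: I''_def)
    show "I'' (n + m) = L"
    proof (cases "m = 0")
      case True thus ?thesis using I'(2) I(2) I'(1) unfolding I''_def by simp
    next
      case False thus ?thesis using I'(2) unfolding I''_def by simp
    qed
    fix i
    show "i \<le> n + m \<Longrightarrow> bid (I'' i)" using I(3) I'(3) by (auto simp: I''_def)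
    assume i: "i < n + m"
    show "I'' i \<subseteq> I'' (Suc i)"
    proof (cases "i < n")
      case True thus ?thesis using a[OF True] I(4) by simp
    next
      case False
      hence le: "n \<le> i" and lt: "i - n < m" using i by auto
      have e: "I'' i = I' (i - n)" "I'' (Suc i) = I' (Suc (i - n))" using b[OF le] by auto
      show ?thesis unfolding e using I'(4) lt by blast
    qed
    show "good (I'' i) (I'' (Suc i))"
    proof (cases "i < n")
      case True thus ?thesis using a[OF True] I(5) by simp
    next
      case False
      hence le: "n \<le> i" and lt: "i - n < m" using i by auto
      have e: "I'' i = I' (i - n)" "I'' (Suc i) = I' (Suc (i - n))" using b[OF le] by auto
      show ?thesis unfolding e using I'(5) lt by blast
    qed
  qed
qed

end

context br begin

definition pw :: "'a \<Rightarrow> int \<Rightarrow> 'a" where "pw g k = g [^]\<^bsub>add_monoid B\<^esub> k"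

lemma pw_closed [simp]: "g \<in> carrier B \<Longrightarrow> pw g k \<in> carrier B"
  unfolding pw_def using A.int_pow_closed by simp
lemma pw_add: "g \<in> carrier B \<Longrightarrow> pw g (k + l) = pw g k \<oplus> pw g l"
  unfolding pw_def using A.int_pow_mult by simp
lemma pw_diff: "g \<in> carrier B \<Longrightarrow> pw g (k - l) = pw g k \<oplus> \<ominus> pw g l"
  unfolding pw_def using A.int_pow_diff by simp
lemma pw_0 [simp]: "pw g 0 = \<zero>"
  unfolding pw_def by simp
lemma pw_1 [simp]: "g \<in> carrier B \<Longrightarrow> pw g 1 = g"
  unfolding pw_def using A.int_pow_1 by simp
lemma pw_mult: "g \<in> carrier B \<Longrightarrow> pw g (k * l) = pw (pw g k) l"
  unfolding pw_def using A.int_pow_pow by simp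
lemma pw_in: "subgroup T (add_monoid B) \<Longrightarrow> g \<in> T \<Longrightarrow> pw g k \<in> T"
  unfolding pw_def using A.subgroup_int_pow_closed by simp

lemma KL: assumes J: "bid J" and g: "g \<in> carrier B" and cg: "cen J g"
  shows "J \<subseteq> gA ({g} \<union> J)" "g \<in> gA ({g} \<union> J)" "\<And>a. a \<in> gA ({g} \<union> J) \<Longrightarrow> cen J a"
    "bid (gA ({g} \<union> J))" "\<And>a. a \<in> gA ({g} \<union> J) \<Longrightarrow> \<exists>k. md J a (pw g k)"
proof -
  have c: "{g} \<union> J \<subseteq> carrier B" using g idealD(3)[OF J] by blast
  show JK: "J \<subseteq> gA ({g} \<union> J)" and gK: "g \<in> gA ({g} \<union> J)" using gA_incl[of "{g} \<union> J"] by auto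
  have Z: "subgroup {a. cen J a} (add_monoid B)" using idealD(1)[OF Zideal[OF J]] .
  have "gA ({g} \<union> J) \<subseteq> {a. cen J a}"
  proof (rule gA_min[OF Z])
    show "{g} \<union> J \<subseteq> {a. cen J a}" using cg cen_elem[OF J] by blast
  qed
  thus cK: "\<And>a. a \<in> gA ({g} \<union> J) \<Longrightarrow> cen J a" by blast
  show "bid (gA ({g} \<union> J))" using CL[OF J gA_sub[OF c] JK cK] .
  fix a assume "a \<in> gA ({g} \<union> J)"
  thus "\<exists>k. md J a (pw g k)"
  proof (induction rule: generate.induct)
    case one
    show ?case by (rule exI[of _ 0]) (simp add: md_refl[OF J])
  next
    case (incl h)
    show ?case
    proof (cases "h = g")
      case True
      hence "md J h (pw g 1)" using md_refl[OF J g] g by simp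
      thus ?thesis by blast
    next
      case False
      hence "h \<in> J" using incl by blast
      hence "md J h (pw g 0)" using md_zero[OF J] idealD(3)[OF J] by auto
      thus ?thesis by blast
    qed
  next
    case (inv h)
    show ?case
    proof (cases "h = g")
      case True
      have e: "pw g (-1) = \<ominus> g" using pw_diff[OF g, of 0 1] g by simp
      have m: "md J (\<ominus> g) (pw g (-1))" using md_refl[OF J] g e by simp
      show ?thesis using True by (intro exI[of _ "-1"]) (use m in \<open>simp add: a_inv_def\<close>)
    next
      case False
      hence "h \<in> J" using inv by blast
      hence "\<ominus> h \<in> J" using idealD(6)[OF J] by blast
      hence m: "md J (\<ominus> h) (pw g 0)" using md_zero[OF J] idealD(3)[OF J] by auto
      show ?thesis by (intro exI[of _ 0]) (use m in \<open>simp add: a_inv_def\<close>)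
    qed
  next
    case (eng h1 h2)
    then obtain k1 k2 where "md J h1 (pw g k1)" "md J h2 (pw g k2)" by blast
    hence "md J (h1 \<oplus> h2) (pw g (k1 + k2))" using md_add[OF J] g by (simp add: pw_add)
    thus ?case by auto
  qed
qed

lemma inf_case: assumes J: "bid J" and g: "g \<in> carrier B" and cg: "cen J g"
  and nz: "\<And>k. k \<noteq> 0 \<Longrightarrow> pw g k \<notin> J"
  shows "good J (gA ({g} \<union> J))"
proof -
  let ?K = "gA ({g} \<union> J)" and ?Q = "brace_quot B J"
  let ?S = "sub_quot B ?K J"
  note K = KL[OF J g cg]
  have Kc: "?K \<subseteq> carrier B" using idealD(3)[OF K(4)] .
  have S: "?S = {J +> a | a. a \<in> ?K}" unfolding sub_quot_def by simp
  have Ksub: "subgroup ?K (add_monoid B)" using idealD(1)[OF K(4)] .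
  have e1: "?S = range (\<lambda>k. J +> pw g k)"
  proof
    show "?S \<subseteq> range (\<lambda>k. J +> pw g k)"
    proof
      fix Xc assume "Xc \<in> ?S"
      then obtain a where a: "a \<in> ?K" "Xc = J +> a" using S by blast
      obtain k where k: "md J a (pw g k)" using K(5)[OF a(1)] by blast
      have ac: "a \<in> carrier B" using a Kc by blast
      have "Xc = J +> pw g k" using coset_eq[OF J ac pw_closed[OF g]] k a(2) by simp
      thus "Xc \<in> range (\<lambda>k. J +> pw g k)" by blast
    qed
    show "range (\<lambda>k. J +> pw g k) \<subseteq> ?S" using S pw_in[OF Ksub K(2)] by blast
  qed
  have inj: "inj (\<lambda>k. J +> pw g k)"
  proof (rule injI)
    fix k l assume "J +> pw g k = J +> pw g l"
    hence "md J (pw g k) (pw g l)" using coset_eq[OF J] g by simp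
    hence "pw g (k - l) \<in> J" using g unfolding md_def by (simp add: pw_diff)
    thus "k = l" using nz[of "k - l"] by auto
  qed
  have infS: "infinite ?S"
  proof
    assume "finite ?S"
    hence "finite (range (\<lambda>k. J +> pw g k))" using e1 by simp
    hence "finite (UNIV :: int set)" using finite_imageD[OF _ inj] by blast
    thus False by simp
  qed
  have gS: "J +> g \<in> ?S" using S K(2) by blast
  have memS: "\<And>a. a \<in> ?K \<Longrightarrow> J +> a \<in> ?S" unfolding sub_quot_def by blast
  have gen1: "generate (add_monoid ?Q) {J +> g} \<subseteq> ?S"
  proof
    fix Xc assume "Xc \<in> generate (add_monoid ?Q) {J +> g}"
    thus "Xc \<in> ?S"
    proof (induction rule: generate.induct)
      case one
      have "ring.zero ?Q = J +> \<zero>" using zero_Q[OF J] .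
      thus ?case using memS[OF asg_zero[OF Ksub]] by simp
    next
      case (incl h) thus ?case using gS by simp
    next
      case (inv h)
      hence "inv\<^bsub>add_monoid ?Q\<^esub> h = J +> \<ominus> g" using neg_Q[OF J g] unfolding a_inv_def by simp
      thus ?case using memS[OF asg_neg[OF Ksub K(2)]] by simp
    next
      case (eng h1 h2)
      then obtain a b where ab: "a \<in> ?K" "b \<in> ?K" "h1 = J +> a" "h2 = J +> b" unfolding sub_quot_def by blast
      have "a \<in> carrier B" "b \<in> carrier B" using ab Kc by auto
      hence "h1 \<otimes>\<^bsub>add_monoid ?Q\<^esub> h2 = J +> (a \<oplus> b)" using add_Q[OF J] ab by simp
      thus ?case using memS[OF asg_add[OF Ksub ab(1,2)]] by simp
    qed
  qed
  have gen2: "\<And>n. J +> pw g (int n) \<in> generate (add_monoid ?Q) {J +> g} \<and>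
                  J +> pw g (- int n) \<in> generate (add_monoid ?Q) {J +> g}"
  proof -
    fix n show "J +> pw g (int n) \<in> generate (add_monoid ?Q) {J +> g} \<and>
                  J +> pw g (- int n) \<in> generate (add_monoid ?Q) {J +> g}"
    proof (induction n)
      case 0
      have "\<one>\<^bsub>add_monoid ?Q\<^esub> = J +> pw g 0" using zero_Q[OF J] by simp
      thus ?case using generate.one[of "add_monoid ?Q" "{J +> g}"] by simp
    next
      case (Suc n)
      have i1: "J +> g \<in> generate (add_monoid ?Q) {J +> g}" by (rule generate.incl) simp
      have i2: "J +> \<ominus> g \<in> generate (add_monoid ?Q) {J +> g}"
        using generate.inv[of "J +> g" "{J +> g}" "add_monoid ?Q"] neg_Q[OF J g] unfolding a_inv_def by simp
      have "int (Suc n) = int n + 1" by simp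
      hence "pw g (int (Suc n)) = pw g (int n) \<oplus> g" using g pw_add[OF g, of "int n" 1] by (simp only: pw_1)
      hence "J +> pw g (int (Suc n)) = (J +> pw g (int n)) \<otimes>\<^bsub>add_monoid ?Q\<^esub> (J +> g)"
        using add_Q[OF J] g by simp
      hence a1: "J +> pw g (int (Suc n)) \<in> generate (add_monoid ?Q) {J +> g}"
        using generate.eng[OF conjunct1[OF Suc] i1] by simp
      have "- int (Suc n) = - int n - 1" by simp
      hence "pw g (- int (Suc n)) = pw g (- int n) \<oplus> \<ominus> g" using g pw_diff[OF g, of "- int n" 1] by (simp only: pw_1)
      hence "J +> pw g (- int (Suc n)) = (J +> pw g (- int n)) \<otimes>\<^bsub>add_monoid ?Q\<^esub> (J +> \<ominus> g)"
        using add_Q[OF J] g by simp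
      hence a2: "J +> pw g (- int (Suc n)) \<in> generate (add_monoid ?Q) {J +> g}"
        using generate.eng[OF conjunct2[OF Suc] i2] by simp
      show ?case using a1 a2 by blast
    qed
  qed
  have "?S \<subseteq> generate (add_monoid ?Q) {J +> g}"
  proof
    fix Xc assume "Xc \<in> ?S"
    then obtain k where k: "Xc = J +> pw g k" using e1 by blast
    show "Xc \<in> generate (add_monoid ?Q) {J +> g}"
    proof (cases "k \<ge> 0")
      case True thus ?thesis using gen2[of "nat k"] k by simp
    next
      case False thus ?thesis using gen2[of "nat (- k)"] k by simp
    qed
  qed
  hence gen: "?S = generate (add_monoid ?Q) {J +> g}" using gen1 by blast
  have soc: "?S \<subseteq> socle ?Q"
  proof
    fix Xc assume "Xc \<in> ?S"
    then obtain a where a: "a \<in> ?K" "Xc = J +> a" using S by blast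
    have ca: "cen J a" using K(3)[OF a(1)] .
    have ac: "a \<in> carrier B" using a Kc by blast
    have "\<forall>b\<in>carrier B. md J (lam a b) b \<and> md J (a \<oplus> b) (b \<oplus> a)" using cenD(2,3)[OF ca] by simp
    thus "Xc \<in> socle ?Q" using socle_Q[OF J ac] a(2) by simp
  qed
  show ?thesis unfolding good_def Let_def using infS gS gen soc by blast
qed

end

context br begin

lemma prime_case: assumes J: "bid J" and g: "g \<in> carrier B" and cg: "cen J g"
  and p: "Factorial_Ring.prime (p::nat)" and pJ: "pw g (int p) \<in> J"
  and mn: "\<And>m. 0 < m \<Longrightarrow> m < p \<Longrightarrow> pw g (int m) \<notin> J"
  shows "good J (gA ({g} \<union> J))"
proof -
  let ?K = "gA ({g} \<union> J)" and ?Q = "brace_quot B J"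
  let ?S = "sub_quot B ?K J"
  note K = KL[OF J g cg]
  have Kc: "?K \<subseteq> carrier B" using idealD(3)[OF K(4)] .
  have Ksub: "subgroup ?K (add_monoid B)" using idealD(1)[OF K(4)] .
  have Jsub: "subgroup J (add_monoid B)" using idealD(1)[OF J] .
  have e: "?S = (\<lambda>i. J +> pw g (int i)) ` {0..<p}"
  proof
    show "?S \<subseteq> (\<lambda>i. J +> pw g (int i)) ` {0..<p}"
    proof
      fix Xc assume "Xc \<in> ?S"
      then obtain a where a: "a \<in> ?K" "Xc = J +> a" unfolding sub_quot_def by blast
      have ac: "a \<in> carrier B" using a Kc by blast
      obtain k where k: "md J a (pw g k)" using K(5)[OF a(1)] by blast
      define r where "r = k mod int p"
      define q where "q = k div int p"
      have p0: "int p > 0" using p prime_gt_0_nat by simp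
      have r: "0 \<le> r" "r < int p" unfolding r_def using p0 by auto
      have kq: "k - r = int p * q" unfolding r_def q_def by (simp add: minus_mod_eq_mult_div)
      have "pw g (k - r) = pw (pw g (int p)) q" using kq pw_mult[OF g] by simp
      also have "\<dots> \<in> J" using pw_in[OF Jsub pJ] .
      finally have "pw g k \<oplus> \<ominus> pw g r \<in> J" using pw_diff[OF g] by simp
      hence "md J (pw g k) (pw g r)" unfolding md_def using g by simp
      hence "md J a (pw g r)" using md_trans[OF J k] by blast
      hence "Xc = J +> pw g r" using coset_eq[OF J ac pw_closed[OF g]] a(2) by simp
      moreover have "r = int (nat r)" "nat r \<in> {0..<p}" using r by auto
      ultimately show "Xc \<in> (\<lambda>i. J +> pw g (int i)) ` {0..<p}" by (metis image_eqI)
    qed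
    show "(\<lambda>i. J +> pw g (int i)) ` {0..<p} \<subseteq> ?S"
      unfolding sub_quot_def using pw_in[OF Ksub K(2)] by blast
  qed
  have inj: "inj_on (\<lambda>i. J +> pw g (int i)) {0..<p}"
  proof (rule inj_onI)
    fix i j assume i: "i \<in> {0..<p}" and j: "j \<in> {0..<p}" and eq: "J +> pw g (int i) = J +> pw g (int j)"
    have m: "md J (pw g (int i)) (pw g (int j))" using eq coset_eq[OF J] g by simp
    show "i = j"
    proof (rule ccontr)
      assume "i \<noteq> j"
      then consider "j < i" | "i < j" by linarith
      thus False
      proof cases
        case 1
        have "pw g (int i - int j) \<in> J" using m unfolding md_def pw_diff[OF g] by blast
        moreover have eqn: "int (i - j) = int i - int j" using 1 by simp
        ultimately have "pw g (int (i - j)) \<in> J" by (simp only: eqn)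
        moreover have "0 < i - j" "i - j < p" using 1 i by auto
        ultimately show False using mn by blast
      next
        case 2
        have "pw g (int j - int i) \<in> J" using md_sym[OF J m] unfolding md_def pw_diff[OF g] by blast
        moreover have eqn: "int (j - i) = int j - int i" using 2 by simp
        ultimately have "pw g (int (j - i)) \<in> J" by (simp only: eqn)
        moreover have "0 < j - i" "j - i < p" using 2 j by auto
        ultimately show False using mn by blast
      qed
    qed
  qed
  have "card ?S = card {0..<p}" unfolding e by (rule card_image[OF inj])
  hence "card ?S = p" by simp
  thus ?thesis unfolding good_def Let_def using p by simp
qed

lemma fin_case: "\<And>J g. bid J \<Longrightarrow> g \<in> carrier B \<Longrightarrow> cen J g \<Longrightarrow> 0 < m \<Longrightarrow> pw g (int m) \<in> J
   \<Longrightarrow> chain J (gA ({g} \<union> J))"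
proof (induction m rule: less_induct)
  case (less m J g)
  note J = less.prems(1) and g = less.prems(2) and cg = less.prems(3)
  note K = KL[OF J g cg]
  show ?case
  proof (cases "\<exists>m'. 0 < m' \<and> m' < m \<and> pw g (int m') \<in> J")
    case True
    then obtain m' where m': "0 < m'" "m' < m" "pw g (int m') \<in> J" by blast
    show ?thesis using less.IH[OF m'(2) J g cg m'(1) m'(3)] .
  next
    case False
    hence mn: "\<And>m'. 0 < m' \<Longrightarrow> m' < m \<Longrightarrow> pw g (int m') \<notin> J" by blast
    show ?thesis
    proof (cases "m = 1")
      case True
      hence "int m = 1" by simp
      hence "pw g (int m) = g" using pw_1[OF g] by (simp only:)
      hence gJ: "g \<in> J" using less.prems(5) by (simp only:)
      have "gA ({g} \<union> J) \<subseteq> J" by (rule gA_min[OF idealD(1)[OF J]]) (use gJ in blast)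
      hence "gA ({g} \<union> J) = J" using K(1) by blast
      thus ?thesis using chain_refl[OF J] by simp
    next
      case m1: False
      show ?thesis
      proof (cases "Factorial_Ring.prime m")
        case True
        have "good J (gA ({g} \<union> J))" using prime_case[OF J g cg True less.prems(5) mn] .
        thus ?thesis using chain_step[OF J K(4) K(1)] by simp
      next
        case np: False
        have mu: "m \<noteq> 0" "\<not> is_unit m" using less.prems(4) m1 by auto
        obtain p where p: "p dvd m" "Factorial_Ring.prime p" using prime_divisor_exists[OF mu] by blast
        have p1: "1 < p" using p(2) prime_gt_1_nat by blast
        have "p \<le> m" using dvd_imp_le[OF p(1) less.prems(4)] .
        moreover have "p \<noteq> m" using p(2) np by auto
        ultimately have pm: "p < m" by simp
        obtain r where r: "m = p * r" using p(1) by blast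
        have r0: "0 < r" using r less.prems(4) by (cases r) auto
        have "1 * r < p * r" using p1 r0 by (intro mult_strict_right_mono) auto
        hence rm: "r < m" using r by simp
        define g' where "g' = pw g (int p)"
        have g'c: "g' \<in> carrier B" using g by (simp add: g'_def)
        have Zs: "subgroup {a. cen J a} (add_monoid B)" using idealD(1)[OF Zideal[OF J]] .
        have cg': "cen J g'" using pw_in[OF Zs, of g] cg unfolding g'_def by simp
        have "pw g' (int r) = pw g (int m)" using pw_mult[OF g, of "int p" "int r"] r by (simp add: g'_def)
        hence g'J: "pw g' (int r) \<in> J" using less.prems(5) by simp
        have c1: "chain J (gA ({g'} \<union> J))" using less.IH[OF rm J g'c cg' r0 g'J] .
        let ?K0 = "gA ({g'} \<union> J)"
        note K0 = KL[OF J g'c cg']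
        have cgK0: "cen ?K0 g" using cen_mono[OF K0(1) cg] .
        have pK0: "pw g (int p) \<in> ?K0" using K0(2) unfolding g'_def .
        have c2: "chain ?K0 (gA ({g} \<union> ?K0))" using less.IH[OF pm K0(4) g cgK0 _ pK0] p1 by simp
        have "gA ({g} \<union> ?K0) = gA ({g} \<union> J)"
        proof
          have "pw g (int p) \<in> gA ({g} \<union> J)" using pw_in[OF idealD(1)[OF K(4)] K(2)] .
          hence "{g'} \<union> J \<subseteq> gA ({g} \<union> J)" using K(1) unfolding g'_def by blast
          hence "?K0 \<subseteq> gA ({g} \<union> J)" by (intro gA_min[OF idealD(1)[OF K(4)]])
          hence "{g} \<union> ?K0 \<subseteq> gA ({g} \<union> J)" using K(2) by blast
          thus "gA ({g} \<union> ?K0) \<subseteq> gA ({g} \<union> J)" by (intro gA_min[OF idealD(1)[OF K(4)]])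
          show "gA ({g} \<union> J) \<subseteq> gA ({g} \<union> ?K0)" by (rule A.mono_generate) (use K0(1) in blast)
        qed
        thus ?thesis using chain_trans[OF c1 c2] by simp
      qed
    qed
  qed
qed

lemma CycL: assumes J: "bid J" and g: "g \<in> carrier B" and cg: "cen J g"
  shows "chain J (gA ({g} \<union> J))"
proof (cases "\<exists>k. k \<noteq> 0 \<and> pw g k \<in> J")
  case True
  then obtain k where k: "k \<noteq> 0" "pw g k \<in> J" by blast
  have "\<exists>m. 0 < m \<and> pw g (int m) \<in> J"
  proof (cases "k > 0")
    case True thus ?thesis using k by (intro exI[of _ "nat k"]) simp
  next
    case False
    have "pw g (0 - k) = \<ominus> pw g k" using pw_diff[OF g, of 0 k] g by simp
    hence "pw g (- k) \<in> J" using idealD(6)[OF J k(2)] by simp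
    thus ?thesis using k False by (intro exI[of _ "nat (- k)"]) simp
  qed
  then obtain m where "0 < m" "pw g (int m) \<in> J" by blast
  thus ?thesis using fin_case J g cg by blast
next
  case False
  hence "good J (gA ({g} \<union> J))" using inf_case[OF J g cg] by blast
  thus ?thesis using chain_step[OF J KL(4)[OF J g cg] KL(1)[OF J g cg]] by blast
qed

end

context br begin

lemma layer_aux: assumes F: "F \<subseteq> Gam n"
  shows "bid (gA (F \<union> Gam (Suc n)))" "gA (F \<union> Gam (Suc n)) \<subseteq> Gam n" "Gam (Suc n) \<subseteq> gA (F \<union> Gam (Suc n))"
proof -
  have c: "F \<union> Gam (Suc n) \<subseteq> Gam n" using F Gam_dec by blast
  have cc: "F \<union> Gam (Suc n) \<subseteq> carrier B" using c Gam_carr by blast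
  show sub: "gA (F \<union> Gam (Suc n)) \<subseteq> Gam n" by (rule gA_min[OF Gam_sA c])
  show JK: "Gam (Suc n) \<subseteq> gA (F \<union> Gam (Suc n))" using gA_incl[of "F \<union> Gam (Suc n)"] by blast
  have cK: "\<And>t. t \<in> gA (F \<union> Gam (Suc n)) \<Longrightarrow> cen (Gam (Suc n)) t" using Gam_cen sub by blast
  show "bid (gA (F \<union> Gam (Suc n)))" using CL[OF Gam_bid gA_sub[OF cc] JK cK] .
qed

lemma layer_fin: "finite F \<Longrightarrow> F \<subseteq> Gam n \<Longrightarrow> chain (Gam (Suc n)) (gA (F \<union> Gam (Suc n)))"
proof (induction F rule: finite_induct)
  case empty
  have "gA ({} \<union> Gam (Suc n)) = Gam (Suc n)"
    using layer_aux(3)[of "{}" n] gA_min[OF Gam_sA, of "{} \<union> Gam (Suc n)" "Suc n"] by auto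
  thus ?case using chain_refl[OF Gam_bid[of "Suc n"]] by (simp del: Gam.simps)
next
  case (insert x F)
  let ?J0 = "Gam (Suc n)"
  let ?K = "gA (F \<union> ?J0)"
  have F: "F \<subseteq> Gam n" and x: "x \<in> Gam n" using insert.prems by auto
  have c1: "chain ?J0 ?K" using insert.IH[OF F] .
  note L = layer_aux[OF F]
  have xc: "x \<in> carrier B" using x Gam_carr by blast
  have cx: "cen ?K x" using cen_mono[OF L(3) Gam_cen[OF x]] .
  have c2: "chain ?K (gA ({x} \<union> ?K))" using CycL[OF L(1) xc cx] .
  have "gA ({x} \<union> ?K) = gA (insert x F \<union> ?J0)"
  proof
    have cc: "insert x F \<union> ?J0 \<subseteq> carrier B" using x F Gam_carr by blast
    have "?K \<subseteq> gA (insert x F \<union> ?J0)" by (rule A.mono_generate) blast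
    moreover have "x \<in> gA (insert x F \<union> ?J0)" using gA_incl[of "insert x F \<union> ?J0"] by blast
    ultimately have "{x} \<union> ?K \<subseteq> gA (insert x F \<union> ?J0)" by blast
    thus "gA ({x} \<union> ?K) \<subseteq> gA (insert x F \<union> ?J0)" by (rule gA_min[OF gA_sub[OF cc]])
    have "F \<union> ?J0 \<subseteq> ?K" using gA_incl[of "F \<union> ?J0"] .
    hence "insert x F \<union> ?J0 \<subseteq> {x} \<union> ?K" by blast
    thus "gA (insert x F \<union> ?J0) \<subseteq> gA ({x} \<union> ?K)" by (rule A.mono_generate)
  qed
  thus ?case using chain_trans[OF c1 c2] by simp
qed

lemma layer: assumes fg: "finitely_generated_brace B" shows "chain (Gam (Suc n)) (Gam n)"
proof -
  obtain F where F: "finite F" "F \<subseteq> Gam n" "Gam n \<subseteq> gA (F \<union> Gam (Suc n))"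
    using GQ[OF fg, of n] by blast
  have "gA (F \<union> Gam (Suc n)) = Gam n" using F(3) layer_aux(2)[OF F(2)] by blast
  thus ?thesis using layer_fin[OF F(1,2)] by simp
qed

lemma all_layers: assumes fg: "finitely_generated_brace B" shows "chain (Gam k) (Gam 0)"
proof (induction k)
  case 0 show ?case using chain_refl[OF Gam_bid[of 0]] .
next
  case (Suc k) thus ?case using chain_trans[OF layer[OF fg] Suc] by simp
qed

lemma main: assumes fg: "finitely_generated_brace B" and cn: "centrally_nilpotent B"
  shows "supersoluble B"
proof -
  obtain c where c: "Gam c = {\<zero>}" using Gam_end[OF cn] by blast
  have "chain {\<zero>} (carrier B)" using all_layers[OF fg, of c] c by simp
  thus ?thesis by (rule chain_ss)
qed

end

theorem theorem3p6:
  fixes B :: "'a ring"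
  assumes "brace B"
    and "finitely_generated_brace B"
    and "centrally_nilpotent B"
  shows "supersoluble B"
proof -
  interpret br B by unfold_locales (rule assms(1))
  show ?thesis using main[OF assms(2,3)] .
qed

end
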